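(* Let $Q(z)=\sum_{i=0}^N a_iz^{N-i}$ ($a_0=1$) be a monic complex polynomial of degree $N\ge2$ with multiset of roots $S=\{\alpha_1,\dots,\alpha_N\}$. Then, with all equivalences $\sim$ holding up to positive constants depending only on $N$: (i) there is a root $\alpha\in S$ with $L_i(\alpha)\sim L_i$ for all integers $0\le i\le N/2$; (ii) for all integers $1\le r\le N/2$, $\Delta_r(\alpha_1,\dots,\alpha_N)\sim L_0L_1\cdots L_{r-1}$; (iii) for each such $r$ there exist a positive integer $h$ and polynomials $D_{r,1},\dots,D_{r,h}\in\mathbb{Z}[A_1,\dots,A_N]$ (depending only on $N,r$) such that $\Delta_r(\alpha_1,\dots,\alpha_N)\sim\sum_{q=1}^h|D_{r,q}(a_1,\dots,a_N)|^{1/q}$ for all such $Q$; (iv) for each $0\le k\le N-2$ there exist a positive integer $m_k$ and polynomials $\sigma_{k,i}\in\mathbb{Z}[A_1,\dots,A_N,Z]$, $1\le i\le m_k$ (depending only on $N,k$), such that for every root $\alpha$ of $Q$, $$\prod_{0\le i\le k}L_i(\alpha)\sim\sum_{i=1}^{m_k}|\sigma_{k,i}(a_1,\dots,a_N;\alpha)|^{1/i}.$$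
   Context: For a set $A\subseteq\mathbb{C}$, $d(A)=\sup_{\alpha,\beta\in A}|\alpha-\beta|$. Local cluster scales: for $\alpha\in S$ and $0\le k\le N-1$, $L_k(\alpha)=\inf d(S_{N-k}(\alpha))$ over sub-multisets $S_{N-k}(\alpha)\subseteq S$ with $N-k$ elements containing $\alpha$. Absolute cluster scales: $L_k=\inf_{\alpha\in S}L_k(\alpha)$, equivalently the minimum of $d(S_{N-k})$ over sub-multisets of $S$ with $N-k$ elements. The $r$-discriminant: $\Delta_r(\alpha_1,\dots,\alpha_N)=\sup\prod_{\nu=1}^r|\alpha_{i_\nu}-\alpha_{j_\nu}|$, the supremum over all $2r$-tuples $(i_1,\dots,i_r,j_1,\dots,j_r)$ of pairwise distinct integers in $\{1,\dots,N\}$. *)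

theory Defs
  imports "HOL-Analysis.Analysis" "HOL-Computational_Algebra.Polynomial" "HOL-Library.Multiset"
begin

definition diam :: "complex multiset \<Rightarrow> real" where
  "diam M = Sup {cmod (a - b) | a b. a \<in># M \<and> b \<in># M}"

definition Lloc :: "complex list \<Rightarrow> nat \<Rightarrow> complex \<Rightarrow> real" where
  "Lloc xs k \<alpha> = Inf {diam T | T. T \<subseteq># mset xs \<and> size T = length xs - k \<and> \<alpha> \<in># T}"

definition Labs :: "complex list \<Rightarrow> nat \<Rightarrow> real" where
  "Labs xs k = Inf {diam T | T. T \<subseteq># mset xs \<and> size T = length xs - k}"

text \<open>r-discriminant: sup over 2r pairwise distinct indices f 0..f(2r-1)
  (i_nu = f nu, j_nu = f (r+nu)), indices 0-based.\<close>
definition Delta :: "complex list \<Rightarrow> nat \<Rightarrow> real" where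
  "Delta xs r = Sup {(\<Prod>\<nu><r. cmod (xs ! (f \<nu>) - xs ! (f (r + \<nu>)))) | f.
      inj_on f {..<2*r} \<and> f ` {..<2*r} \<subseteq> {..<length xs}}"

text \<open>The monic polynomial with root list xs, and its coefficient a_i
  (Q(z) = sum_i a_i z^(N-i)).\<close>
definition monic_of :: "complex list \<Rightarrow> complex poly" where
  "monic_of xs = (\<Prod>x\<leftarrow>xs. [:-x, 1:])"

definition acoeff :: "complex list \<Rightarrow> nat \<Rightarrow> complex" where
  "acoeff xs i = coeff (monic_of xs) (length xs - i)"

text \<open>Multivariate integer polynomials, represented explicitly as lists of
  (coefficient, exponent list) monomials; variable j is v j.\<close>
type_synonym int_mpoly = "(int \<times> nat list) list"

definition mpoly_vars :: "nat \<Rightarrow> int_mpoly \<Rightarrow> bool" where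
  "mpoly_vars n p \<longleftrightarrow> (\<forall>(c, e) \<in> set p. length e \<le> n)"

definition mpoly_eval :: "int_mpoly \<Rightarrow> (nat \<Rightarrow> complex) \<Rightarrow> complex" where
  "mpoly_eval p v = (\<Sum>(c, e)\<leftarrow>p. of_int c * (\<Prod>j<length e. v j ^ (e ! j)))"

definition sim_by :: "real \<Rightarrow> real \<Rightarrow> real \<Rightarrow> real \<Rightarrow> bool" where
  "sim_by c C A B \<longleftrightarrow> c * B \<le> A \<and> A \<le> C * B"

end

theory Submission
  imports Defs
begin

definition Dd :: "(nat \<Rightarrow> complex) \<Rightarrow> nat set \<Rightarrow> real" where
  "Dd x I = Sup {cmod (x i - x j) | i j. i \<in> I \<and> j \<in> I}"

lemma Dd_set_eq: "{cmod (x i - x j) | i j. i \<in> I \<and> j \<in> I} = (\<lambda>(i,j). cmod (x i - x j)) ` (I \<times> I)"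
  by auto

lemma Dd_ge: assumes "finite I" "i \<in> I" "j \<in> I" shows "cmod (x i - x j) \<le> Dd x I"
  unfolding Dd_def by (rule cSup_upper) (use assms in \<open>auto simp: Dd_set_eq intro!: bdd_above_finite\<close>)

lemma Dd_le: assumes "I \<noteq> {}" "\<And>i j. i \<in> I \<Longrightarrow> j \<in> I \<Longrightarrow> cmod (x i - x j) \<le> B"
  shows "Dd x I \<le> B"
  unfolding Dd_def
proof (rule cSup_least)
  show "{cmod (x i - x j) |i j. i \<in> I \<and> j \<in> I} \<noteq> {}" using assms(1) by blast
next
  fix y assume "y \<in> {cmod (x i - x j) |i j. i \<in> I \<and> j \<in> I}"
  then show "y \<le> B" using assms(2) by blast
qed

lemma Dd_nonneg: assumes "finite I" "I \<noteq> {}" shows "0 \<le> Dd x I"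
proof -
  obtain i where "i \<in> I" using assms by auto
  then show ?thesis using Dd_ge[OF assms(1) \<open>i \<in> I\<close> \<open>i \<in> I\<close>, of x] by simp
qed

lemma Dd_mono: assumes "finite J" "I \<subseteq> J" "I \<noteq> {}" shows "Dd x I \<le> Dd x J"
proof (rule Dd_le[OF assms(3)])
  fix i j assume "i \<in> I" "j \<in> I"
  then show "cmod (x i - x j) \<le> Dd x J" using Dd_ge[OF assms(1)] assms(2) by blast
qed

lemma Dd_insert: assumes "finite I" "t \<in> I"
  shows "Dd x (insert u I) \<le> Dd x I + cmod (x u - x t)"
proof (rule Dd_le)
  fix i j assume i: "i \<in> insert u I" and j: "j \<in> insert u I"
  have nn: "0 \<le> Dd x I" using Dd_nonneg assms by auto
  have tri: "cmod (x u - x p) \<le> Dd x I + cmod (x u - x t)" if "p \<in> I" for p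
  proof -
    have "cmod (x u - x p) \<le> cmod (x u - x t) + cmod (x t - x p)"
      using norm_triangle_ineq[of "x u - x t" "x t - x p"] by simp
    also have "cmod (x t - x p) \<le> Dd x I" using Dd_ge assms that by auto
    finally show ?thesis by simp
  qed
  show "cmod (x i - x j) \<le> Dd x I + cmod (x u - x t)"
  proof (cases "i = u")
    case True
    then show ?thesis
    proof (cases "j = u")
      case True with \<open>i = u\<close> nn show ?thesis by simp
    next
      case False with j have "j \<in> I" by auto
      then show ?thesis using tri \<open>i = u\<close> by auto
    qed
  next
    case False with i have iI: "i \<in> I" by auto
    show ?thesis
    proof (cases "j = u")
      case True
      have "cmod (x i - x j) = cmod (x u - x i)" using True by (simp add: norm_minus_commute)
      then show ?thesis using tri iI by auto
    next
      case False with j have "j \<in> I" by auto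
      then show ?thesis using Dd_ge[OF assms(1) iI, of j x] norm_ge_zero[of "x u - x t"] by linarith
    qed
  qed
qed auto

lemma Dd_center: assumes "I \<noteq> {}" "\<And>j. j \<in> I \<Longrightarrow> cmod (x j - c) \<le> R"
  shows "Dd x I \<le> 2 * R"
proof (rule Dd_le[OF assms(1)])
  fix i j assume "i \<in> I" "j \<in> I"
  have "cmod (x i - x j) \<le> cmod (x i - c) + cmod (x j - c)"
    using norm_triangle_ineq[of "x i - c" "c - x j"] by (simp add: norm_minus_commute)
  then show "cmod (x i - x j) \<le> 2 * R" using assms(2)[OF \<open>i \<in> I\<close>] assms(2)[OF \<open>j \<in> I\<close>] by linarith
qed

definition LA :: "(nat \<Rightarrow> complex) \<Rightarrow> nat set \<Rightarrow> nat \<Rightarrow> real" where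
  "LA x A k = Inf {Dd x I | I. I \<subseteq> A \<and> card I = card A - k}"

definition LL :: "(nat \<Rightarrow> complex) \<Rightarrow> nat set \<Rightarrow> nat \<Rightarrow> complex \<Rightarrow> real" where
  "LL x A k a = Inf {Dd x I | I. I \<subseteq> A \<and> card I = card A - k \<and> (\<exists>i\<in>I. x i = a)}"

lemma LA_set_finite: "finite A \<Longrightarrow> finite {Dd x I | I. I \<subseteq> A \<and> card I = card A - k}"
proof -
  assume "finite A"
  have "{Dd x I | I. I \<subseteq> A \<and> card I = card A - k} \<subseteq> Dd x ` Pow A" by auto
  then show ?thesis using \<open>finite A\<close> finite_subset by blast
qed

lemma LL_set_finite: "finite A \<Longrightarrow> finite {Dd x I | I. I \<subseteq> A \<and> card I = card A - k \<and> (\<exists>i\<in>I. x i = a)}"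
proof -
  assume "finite A"
  have "{Dd x I | I. I \<subseteq> A \<and> card I = card A - k \<and> (\<exists>i\<in>I. x i = a)} \<subseteq> Dd x ` Pow A" by auto
  then show ?thesis using \<open>finite A\<close> finite_subset by blast
qed

lemma LA_le: assumes "finite A" "I \<subseteq> A" "card I = card A - k" shows "LA x A k \<le> Dd x I"
  unfolding LA_def by (rule cInf_lower) (use assms LA_set_finite[OF assms(1)] in \<open>auto intro: bdd_below_finite\<close>)

lemma LA_att: assumes "finite A"
  shows "\<exists>I. I \<subseteq> A \<and> card I = card A - k \<and> LA x A k = Dd x I"
proof -
  let ?S = "{Dd x I | I. I \<subseteq> A \<and> card I = card A - k}"
  obtain I0 where "I0 \<subseteq> A" "card I0 = card A - k" using ex_card[of "card A - k" A] by auto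
  then have ne: "?S \<noteq> {}" by auto
  have "LA x A k \<in> ?S" unfolding LA_def cInf_eq_Min[OF LA_set_finite[OF assms] ne]
    by (rule Min_in[OF LA_set_finite[OF assms] ne])
  then show ?thesis by auto
qed

lemma LL_le: assumes "finite A" "I \<subseteq> A" "card I = card A - k" "i \<in> I" "x i = a"
  shows "LL x A k a \<le> Dd x I"
  unfolding LL_def by (rule cInf_lower) (use assms LL_set_finite[OF assms(1)] in \<open>auto intro: bdd_below_finite\<close>)

lemma LL_att: assumes "finite A" "i0 \<in> A" "x i0 = a" "k < card A"
  shows "\<exists>I. I \<subseteq> A \<and> card I = card A - k \<and> (\<exists>i\<in>I. x i = a) \<and> LL x A k a = Dd x I"
proof -
  let ?S = "{Dd x I | I. I \<subseteq> A \<and> card I = card A - k \<and> (\<exists>i\<in>I. x i = a)}"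
  have "card A - k - 1 \<le> card (A - {i0})" using assms by (simp add: card_Diff_singleton)
  then obtain I1 where I1: "I1 \<subseteq> A - {i0}" "card I1 = card A - k - 1" using ex_card by blast
  have fin1: "finite I1" using I1(1) assms(1) finite_subset by blast
  have "i0 \<notin> I1" using I1 by auto
  then have "card (insert i0 I1) = card A - k" using I1 fin1 assms(4) by simp
  moreover have "insert i0 I1 \<subseteq> A" using I1 assms by auto
  ultimately have ne: "?S \<noteq> {}" using assms(3) by blast
  have "LL x A k a \<in> ?S" unfolding LL_def cInf_eq_Min[OF LL_set_finite[OF assms(1)] ne]
    by (rule Min_in[OF LL_set_finite[OF assms(1)] ne])
  then show ?thesis by auto
qed

lemma LA_nonneg: assumes "finite A" "k < card A" shows "0 \<le> LA x A k"
proof -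
  obtain I where I: "I \<subseteq> A" "card I = card A - k" "LA x A k = Dd x I" using LA_att[OF assms(1)] by blast
  have "I \<noteq> {}" using I assms by auto
  then show ?thesis using I Dd_nonneg[of I x] assms(1) finite_subset by metis
qed

lemma LA_le_LL: assumes "finite A" "i0 \<in> A" "x i0 = a" "k < card A"
  shows "LA x A k \<le> LL x A k a"
proof -
  obtain I where "I \<subseteq> A" "card I = card A - k" "LL x A k a = Dd x I"
    using LL_att[of A i0 x a k] assms by blast
  then show ?thesis using LA_le[OF assms(1)] by metis
qed

lemma LA_mono: assumes "finite A" "i \<le> j" "j < card A" shows "LA x A j \<le> LA x A i"
proof -
  obtain I where I: "I \<subseteq> A" "card I = card A - i" "LA x A i = Dd x I" using LA_att[OF assms(1)] by blast
  have "card A - j \<le> card I" using I assms by simp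
  then obtain I' where I': "I' \<subseteq> I" "card I' = card A - j" using ex_card by blast
  have fI: "finite I" using I assms(1) finite_subset by blast
  have "I' \<noteq> {}" using I' assms by auto
  have "LA x A j \<le> Dd x I'" using LA_le[OF assms(1)] I I' by auto
  also have "\<dots> \<le> Dd x I" using Dd_mono[OF fI I'(1) \<open>I' \<noteq> {}\<close>] .
  finally show ?thesis using I by simp
qed

lemma central:
  assumes "finite A" "card A \<ge> 1"
  shows "\<exists>u\<in>A. \<forall>j. 2 * j \<le> card A \<longrightarrow>
           (\<exists>J. J \<subseteq> A \<and> card J = card A - j \<and> u \<in> J \<and> Dd x J \<le> 2 * LA x A j)"
proof -
  define n where "n = card A"
  define m where "m = n div 2"
  have mn: "m < n" using assms unfolding m_def n_def by simp
  obtain Im where Im: "Im \<subseteq> A" "card Im = n - m" "LA x A m = Dd x Im"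
    using LA_att[OF assms(1)] unfolding n_def by blast
  have "Im \<noteq> {}" using Im mn by auto
  then obtain u where u: "u \<in> Im" by auto
  have finIm: "finite Im" using Im assms(1) finite_subset by blast
  have "\<exists>J. J \<subseteq> A \<and> card J = n - j \<and> u \<in> J \<and> Dd x J \<le> 2 * LA x A j" if j: "2 * j \<le> n" for j
  proof -
    have jm: "j \<le> m" using j unfolding m_def by linarith
    have nnm: "0 \<le> LA x A m" using LA_nonneg[OF assms(1)] mn unfolding n_def by simp
    show ?thesis
    proof (cases "j = m")
      case True
      then show ?thesis using Im u nnm by (intro exI[of _ Im]) auto
    next
      case False
      then have jm': "j < m" using jm by simp
      obtain Ij where Ij: "Ij \<subseteq> A" "card Ij = n - j" "LA x A j = Dd x Ij"
        using LA_att[OF assms(1)] unfolding n_def by blast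
      have finIj: "finite Ij" using Ij assms(1) finite_subset by blast
      show ?thesis
      proof (cases "u \<in> Ij")
        case True
        have "0 \<le> LA x A j" using LA_nonneg[OF assms(1)] jm' mn unfolding n_def by simp
        then show ?thesis using True Ij by (intro exI[of _ Ij]) auto
      next
        case False
        have "card (Ij \<union> Im) \<le> n" using Ij Im assms(1) card_mono unfolding n_def by (metis Un_subset_iff)
        moreover have "card Ij + card Im = card (Ij \<union> Im) + card (Ij \<inter> Im)"
          using card_Un_Int[OF finIj finIm] .
        moreover have "j + m < n" using jm' j unfolding m_def by linarith
        ultimately have "card (Ij \<inter> Im) > 0" using Ij Im by linarith
        then obtain t where t: "t \<in> Ij" "t \<in> Im" by (metis card_gt_0_iff disjoint_iff_not_equal)
        have "card Ij \<ge> 2" using Ij jm' j unfolding m_def by linarith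
        then have "card (Ij - {t}) \<ge> 1" using t finIj by (simp add: card_Diff_singleton)
        then have "Ij - {t} \<noteq> {}" by (cases "Ij - {t} = {}") auto
        then obtain w where w: "w \<in> Ij" "w \<noteq> t" by blast
        define J where "J = insert u (Ij - {w})"
        have "card (Ij - {w}) = n - j - 1" using finIj w Ij by (simp add: card_Diff_singleton)
        then have "card J = n - j" unfolding J_def using False finIj \<open>card Ij \<ge> 2\<close> Ij by simp
        moreover have "J \<subseteq> A" unfolding J_def using Ij Im u by auto
        moreover have "Dd x J \<le> 2 * LA x A j"
        proof -
          have "Dd x J \<le> Dd x (Ij - {w}) + cmod (x u - x t)"
            unfolding J_def by (rule Dd_insert) (use finIj t w in auto)
          also have "Dd x (Ij - {w}) \<le> Dd x Ij" using Dd_mono[OF finIj, of "Ij - {w}"] t w by auto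
          also have "cmod (x u - x t) \<le> Dd x Im" using Dd_ge[OF finIm u t(2)] .
          also have "Dd x Im \<le> LA x A j" using Im LA_mono[OF assms(1) jm'[THEN less_imp_le], of x] mn unfolding n_def by simp
          finally show ?thesis using Ij by simp
        qed
        moreover have "u \<in> J" unfolding J_def by simp
        ultimately show ?thesis by blast
      qed
    qed
  qed
  then show ?thesis using u Im unfolding n_def by blast
qed


lemma prod_le_L:
  fixes d L :: "nat \<Rightarrow> real"
  assumes "finite V" "\<And>v. v \<in> V \<Longrightarrow> 0 \<le> d v"
    and "\<And>V'. V' \<subseteq> V \<Longrightarrow> V' \<noteq> {} \<Longrightarrow> \<exists>v\<in>V'. d v \<le> L (card V' - 1)"
  shows "(\<Prod>v\<in>V. d v) \<le> (\<Prod>i<card V. L i)"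
  using assms
proof (induction "card V" arbitrary: V)
  case 0
  then show ?case by simp
next
  case (Suc n)
  then have "V \<noteq> {}" by auto
  then obtain v where v: "v \<in> V" "d v \<le> L (card V - 1)" using Suc.prems(3)[of V] by auto
  then have v: "v \<in> V" "d v \<le> L n" using Suc.hyps(2)[symmetric] by auto
  have c: "card (V - {v}) = n" using Suc.hyps(2) v by (simp add: card_Diff_singleton)
  have IH: "(\<Prod>w\<in>V - {v}. d w) \<le> (\<Prod>i<n. L i)"
  proof -
    have "(\<Prod>w\<in>V - {v}. d w) \<le> (\<Prod>i<card (V - {v}). L i)"
    proof (rule Suc.hyps(1))
      fix V' assume "V' \<subseteq> V - {v}" "V' \<noteq> {}"
      then show "\<exists>v\<in>V'. d v \<le> L (card V' - 1)" using Suc.prems(3)[of V'] by blast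
    qed (use c Suc.prems in auto)
    then show ?thesis using c by simp
  qed
  have "(\<Prod>w\<in>V. d w) = d v * (\<Prod>w\<in>V - {v}. d w)"
    using Suc.prems(1) v by (simp add: prod.remove)
  also have "\<dots> \<le> L n * (\<Prod>i<n. L i)"
  proof (rule mult_mono)
    show "0 \<le> L n" using v Suc.prems(2)[OF v(1)] by linarith
  qed (use v IH Suc.prems(2) in \<open>auto intro: prod_nonneg\<close>)
  also have "\<dots> = (\<Prod>i<card V. L i)" using Suc.hyps(2)[symmetric] by (simp add: mult.commute)
  finally show ?case .
qed

definition pp :: "(nat \<Rightarrow> complex) \<Rightarrow> (nat \<Rightarrow> nat) \<Rightarrow> nat \<Rightarrow> real" where
  "pp x f r = (\<Prod>\<nu><r. cmod (x (f \<nu>) - x (f (r + \<nu>))))"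

lemma pair_upper:
  assumes A: "finite A" and inj: "inj_on f {..<2*r}" and im: "f ` {..<2*r} \<subseteq> A"
  shows "pp x f r \<le> (\<Prod>i<r. LA x A i)"
proof -
  have cardA: "2 * r \<le> card A"
    using card_inj_on_le[OF inj im A] by simp
  have "(\<Prod>v\<in>{..<r}. cmod (x (f v) - x (f (r + v)))) \<le> (\<Prod>i<card {..<r}. LA x A i)"
  proof (rule prod_le_L)
    fix V' assume V': "V' \<subseteq> {..<r}" "V' \<noteq> {}"
    define s where "s = card V'"
    have fV: "finite V'" using V' finite_subset by blast
    have s1: "s \<ge> 1" using V' fV unfolding s_def by (simp add: Suc_le_eq card_gt_0_iff)
    have sr: "s \<le> r" using card_mono[OF _ V'(1)] unfolding s_def by simp
    obtain I where I: "I \<subseteq> A" "card I = card A - (s - 1)" "LA x A (s - 1) = Dd x I"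
      using LA_att[OF A] by blast
    define E where "E = A - I"
    have cE: "card E = s - 1" unfolding E_def using I A s1 sr cardA
      by (simp add: card_Diff_subset finite_subset)
    have "\<exists>v\<in>V'. f v \<in> I \<and> f (r + v) \<in> I"
    proof (rule ccontr)
      assume neg: "\<not> (\<exists>v\<in>V'. f v \<in> I \<and> f (r + v) \<in> I)"
      have "f v \<in> A \<and> f (r + v) \<in> A" if "v \<in> V'" for v
      proof -
        have "v < r" using V'(1) that by auto
        then have "v \<in> {..<2*r}" "r + v \<in> {..<2*r}" by auto
        then show ?thesis using im by blast
      qed
      then have H: "\<forall>v\<in>V'. f v \<in> E \<or> f (r + v) \<in> E" unfolding E_def using neg by blast
      define g where "g v = (if f v \<in> E then f v else f (r + v))" for v
      have "inj_on g V'"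
      proof (rule inj_onI)
        fix a b assume ab: "a \<in> V'" "b \<in> V'" "g a = g b"
        have a: "a < r" "b < r" using ab V'(1) by auto
        show "a = b"
        proof -
          have m: "a \<in> {..<2*r}" "b \<in> {..<2*r}" "r + a \<in> {..<2*r}" "r + b \<in> {..<2*r}" using a by auto
          consider "f a = f b" | "f a = f (r + b)" | "f (r + a) = f b" | "f (r + a) = f (r + b)"
            using ab(3) unfolding g_def by (auto split: if_splits)
          then show ?thesis
          proof cases
            case 1 then show ?thesis using inj_onD[OF inj _ m(1) m(2)] by simp
          next
            case 2 then have "a = r + b" using inj_onD[OF inj _ m(1) m(4)] by simp
            then show ?thesis using a by simp
          next
            case 3 then have "r + a = b" using inj_onD[OF inj _ m(3) m(2)] by simp
            then show ?thesis using a by simp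
          next
            case 4 then show ?thesis using inj_onD[OF inj _ m(3) m(4)] by simp
          qed
        qed
      qed
      moreover have "g ` V' \<subseteq> E" using H unfolding g_def by auto
      moreover have "finite E" unfolding E_def using A by simp
      ultimately have "card V' \<le> card E" using card_inj_on_le by blast
      then show False using cE s1 unfolding s_def by simp
    qed
    then obtain v where v: "v \<in> V'" "f v \<in> I" "f (r + v) \<in> I" by blast
    have "cmod (x (f v) - x (f (r + v))) \<le> Dd x I" using Dd_ge[OF finite_subset[OF I(1) A] v(2) v(3)] .
    then show "\<exists>v\<in>V'. cmod (x (f v) - x (f (r + v))) \<le> LA x A (card V' - 1)"
      using v I unfolding s_def by auto
  qed auto
  then show ?thesis unfolding pp_def by simp
qed


lemma step_claim:
  assumes A: "finite A" and u: "u \<in> A" and v: "v \<in> A" "u \<noteq> v"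
    and maxv: "\<And>w. w \<in> A - {u} \<Longrightarrow> cmod (x u - x w) \<le> cmod (x u - x v)"
    and cen: "\<And>j. 2 * j \<le> card A \<Longrightarrow> \<exists>J. J \<subseteq> A \<and> card J = card A - j \<and> u \<in> J \<and> Dd x J \<le> 2 * LA x A j"
    and i: "2 * i + 4 \<le> card A"
  shows "LA x A (Suc i) \<le> 4 * LA x (A - {u, v}) i"
proof -
  define n where "n = card A"
  define A' where "A' = A - {u, v}"
  have cA': "card A' = n - 2" unfolding A'_def n_def using A u v by (simp add: card_Diff_subset)
  have fA': "finite A'" unfolding A'_def using A by simp
  obtain T where T: "T \<subseteq> A'" "card T = card A' - i" "LA x A' i = Dd x T"
    using LA_att[OF fA'] by blast
  have finT: "finite T" using T fA' finite_subset by blast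
  have cT: "card T = n - Suc (Suc i)" using T cA' by simp
  have TA: "T \<subseteq> A" using T unfolding A'_def by auto
  have uT: "u \<notin> T" "v \<notin> T" using T unfolding A'_def by auto
  have Tne: "T \<noteq> {}" using cT i unfolding n_def by auto
  have DT0: "0 \<le> Dd x T" using Dd_nonneg[OF finT Tne] .
  define L1 where "L1 = LA x A (Suc i)"
  define L2 where "L2 = LA x A (Suc (Suc i))"
  have L2T: "L2 \<le> Dd x T" unfolding L2_def using LA_le[OF A TA] cT unfolding n_def by simp
  have "L1 \<le> 4 * Dd x T"
  proof (cases "L1 \<le> 4 * L2")
    case True then show ?thesis using L2T by linarith
  next
    case False
    obtain J where J: "J \<subseteq> A" "card J = n - Suc (Suc i)" "u \<in> J" "Dd x J \<le> 2 * L2"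
      using cen[of "Suc (Suc i)"] i unfolding L2_def n_def by auto
    have finJ: "finite J" using J A finite_subset by blast
    have "\<exists>t\<in>T. cmod (x u - x t) \<le> 2 * L2"
    proof (cases "T \<inter> J = {}")
      case False
      then obtain t where "t \<in> T" "t \<in> J" by blast
      then show ?thesis using Dd_ge[OF finJ J(3), of t x] J(4) by force
    next
      case True
      have "card (T \<union> J) = card T + card J" using card_Un_disjoint[OF finT finJ True] .
      then have "card (T \<union> J) \<ge> card A" using cT J(2) i unfolding n_def by linarith
      moreover have "T \<union> J \<subseteq> A" using TA J by auto
      ultimately have "T \<union> J = A" using card_seteq[OF A] by blast
      then have "v \<in> J" using v uT by auto
      then have vb: "cmod (x u - x v) \<le> 2 * L2" using Dd_ge[OF finJ J(3), of v x] J(4) by auto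
      obtain t where t: "t \<in> T" using Tne by auto
      then have "t \<in> A - {u}" using TA uT by auto
      then show ?thesis using maxv[of t] vb t by force
    qed
    then obtain t where t: "t \<in> T" "cmod (x u - x t) \<le> 2 * L2" by blast
    have "card (insert u T) = card A - Suc i" using cT uT finT i unfolding n_def by simp
    moreover have "insert u T \<subseteq> A" using TA u by auto
    ultimately have "L1 \<le> Dd x (insert u T)" unfolding L1_def using LA_le[OF A] by blast
    also have "\<dots> \<le> Dd x T + cmod (x u - x t)" using Dd_insert[OF finT t(1)] .
    finally show ?thesis using t(2) False DT0 by linarith
  qed
  then show ?thesis using T unfolding L1_def A'_def by simp
qed

lemma pair_lower:
  assumes "finite A" "2 * r \<le> card A"
  shows "\<exists>f. inj_on f {..<2*r} \<and> f ` {..<2*r} \<subseteq> A \<and> (1/4::real)^(r*r) * (\<Prod>i<r. LA x A i) \<le> pp x f r"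
  using assms
proof (induction r arbitrary: A)
  case 0
  show ?case by (rule exI[of _ id]) (simp add: pp_def)
next
  case (Suc r)
  note A = Suc.prems(1)
  define n where "n = card A"
  have n2: "2 * r + 2 \<le> n" using Suc.prems unfolding n_def by simp
  obtain u where u: "u \<in> A" and cen: "\<And>j. 2 * j \<le> card A \<Longrightarrow>
           (\<exists>J. J \<subseteq> A \<and> card J = card A - j \<and> u \<in> J \<and> Dd x J \<le> 2 * LA x A j)"
    using central[OF A, of x] n2 unfolding n_def by auto
  define A1 where "A1 = A - {u}"
  have fA1: "finite A1" unfolding A1_def using A by simp
  have "card A1 = n - 1" using A u unfolding A1_def n_def by (simp add: card_Diff_singleton)
  then have A1ne: "A1 \<noteq> {}" using n2 by auto
  define g where "g w = cmod (x u - x w)" for w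
  obtain v where v: "v \<in> A1" "g v = Max (g ` A1)"
  proof -
    have "Max (g ` A1) \<in> g ` A1" using Max_in[of "g ` A1"] fA1 A1ne by auto
    then show ?thesis using that by force
  qed
  have maxv: "\<And>w. w \<in> A - {u} \<Longrightarrow> cmod (x u - x w) \<le> cmod (x u - x v)"
    using v fA1 unfolding A1_def g_def by (metis Max_ge finite_imageI image_eqI)
  have vA: "v \<in> A" "u \<noteq> v" using v unfolding A1_def by auto
  define A' where "A' = A - {u, v}"
  have cA': "card A' = n - 2" unfolding A'_def n_def using A u vA by (simp add: card_Diff_subset)
  have fA': "finite A'" unfolding A'_def using A by simp
  obtain f' where f': "inj_on f' {..<2*r}" "f' ` {..<2*r} \<subseteq> A'"
     "(1/4::real)^(r*r) * (\<Prod>i<r. LA x A' i) \<le> pp x f' r"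
  proof -
    have "2 * r \<le> n - 2" using n2 by simp
    then show ?thesis using Suc.IH[OF fA'] cA' that by auto
  qed
  define d where "d = cmod (x u - x v)"
  have c0: "LA x A 0 \<le> 2 * d"
  proof -
    have "LA x A 0 \<le> Dd x A" using LA_le[OF A, of A 0] by simp
    also have "\<dots> \<le> 2 * d" unfolding d_def
    proof (rule Dd_center)
      show "A \<noteq> {}" using u by auto
      fix j assume "j \<in> A"
      then show "cmod (x j - x u) \<le> cmod (x u - x v)"
        using maxv[of j] by (cases "j = u") (auto simp: norm_minus_commute)
    qed
    finally show ?thesis .
  qed
  have c2: "LA x A (Suc i) \<le> 4 * LA x A' i" if "i < r" for i
    unfolding A'_def by (rule step_claim[OF A u vA maxv cen]) (use that n2 n_def in auto)
  define idx where "idx k = (if k < Suc r then k - 1 else k - 2)" for k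
  define f where "f k = (if k = 0 then u else if k = Suc r then v else f' (idx k))" for k
  have idx_lt: "idx k < 2 * r" if "k < 2 * Suc r" "k \<noteq> 0" "k \<noteq> Suc r" for k
    using that unfolding idx_def by auto
  have idx_inj: "k = l" if "k < 2 * Suc r" "k \<noteq> 0" "k \<noteq> Suc r" "l < 2 * Suc r" "l \<noteq> 0" "l \<noteq> Suc r"
     "idx k = idx l" for k l
    using that unfolding idx_def by (auto split: if_splits)
  have fim: "f ` {..<2 * Suc r} \<subseteq> A"
  proof
    fix y assume "y \<in> f ` {..<2 * Suc r}"
    then obtain k where k: "k < 2 * Suc r" "y = f k" by auto
    have "f' (idx k) \<in> A'" if "k \<noteq> 0" "k \<noteq> Suc r" using f'(2) idx_lt[OF k(1) that] by auto
    then show "y \<in> A" using k u vA unfolding f_def A'_def by (auto split: if_splits)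
  qed
  have finj: "inj_on f {..<2 * Suc r}"
  proof (rule inj_onI)
    fix a b assume a: "a \<in> {..<2 * Suc r}" and b: "b \<in> {..<2 * Suc r}" and e: "f a = f b"
    have inA': "f' k \<in> A'" if "k < 2 * r" for k using f'(2) that by auto
    have fu: "u \<notin> A'" "v \<notin> A'" unfolding A'_def by auto
    have inj': "k = l" if "f' k = f' l" "k < 2 * r" "l < 2 * r" for k l
      using inj_onD[OF f'(1) that(1)] that by auto
    have a': "a < 2 * Suc r" and b': "b < 2 * Suc r" using a b by auto
    show "a = b"
    proof (cases "a = 0 \<or> a = Suc r")
      case True
      then show ?thesis
      proof (cases "b = 0 \<or> b = Suc r")
        case True
        then show ?thesis using \<open>a = 0 \<or> a = Suc r\<close> e vA(2) unfolding f_def by auto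
      next
        case False
        then have "f b \<in> A'" using inA'[OF idx_lt[OF b']] unfolding f_def by auto
        then show ?thesis using \<open>a = 0 \<or> a = Suc r\<close> e fu unfolding f_def by auto
      qed
    next
      case False
      then have fa: "f a \<in> A'" "f a = f' (idx a)" using inA'[OF idx_lt[OF a']] unfolding f_def by auto
      show ?thesis
      proof (cases "b = 0 \<or> b = Suc r")
        case True
        then show ?thesis using fa e fu unfolding f_def by auto
      next
        case False
        then have "f b = f' (idx b)" unfolding f_def by auto
        then have "idx a = idx b" using inj' fa e idx_lt a' b' False \<open>\<not> (a = 0 \<or> a = Suc r)\<close> by metis
        then show ?thesis using idx_inj a' b' False \<open>\<not> (a = 0 \<or> a = Suc r)\<close> by blast
      qed
    qed
  qed
  have ppf: "pp x f (Suc r) = d * pp x f' r"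
  proof -
    have "pp x f (Suc r) = (\<Prod>k<Suc r. cmod (x (f k) - x (f (Suc r + k))))" unfolding pp_def ..
    also have "\<dots> = cmod (x (f 0) - x (f (Suc r))) * (\<Prod>k<r. cmod (x (f (Suc k)) - x (f (Suc r + Suc k))))"
      by (simp only: prod.lessThan_Suc_shift add_0_right)
    also have "\<dots> = d * pp x f' r" unfolding pp_def d_def f_def idx_def by simp
    finally show ?thesis .
  qed
  have Lnn: "0 \<le> LA x A' i" if "i < r" for i using LA_nonneg[OF fA'] that cA' n2 by simp
  have LnnA: "0 \<le> LA x A i" if "i < Suc r" for i using LA_nonneg[OF A] that n2 unfolding n_def by simp
  have Q: "(\<Prod>i<r. LA x A (Suc i)) \<le> 4^r * (\<Prod>i<r. LA x A' i)"
  proof -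
    have "(\<Prod>i<r. LA x A (Suc i)) \<le> (\<Prod>i<r. 4 * LA x A' i)"
      by (rule prod_mono) (use c2 LnnA in auto)
    also have "\<dots> = 4^r * (\<Prod>i<r. LA x A' i)" by (simp add: prod.distrib)
    finally show ?thesis .
  qed
  define P where "P = (\<Prod>i<r. LA x A' i)"
  have P0: "0 \<le> P" unfolding P_def using Lnn by (auto intro: prod_nonneg)
  have Q0: "0 \<le> (\<Prod>i<r. LA x A (Suc i))" using LnnA by (auto intro: prod_nonneg)
  have d0: "0 \<le> d" unfolding d_def by simp
  have "(\<Prod>i<Suc r. LA x A i) = LA x A 0 * (\<Prod>i<r. LA x A (Suc i))"
    by (simp only: prod.lessThan_Suc_shift)
  also have "\<dots> \<le> (2 * d) * (4^r * P)"
    by (rule mult_mono) (use c0 Q d0 Q0 P_def in auto)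
  finally have main: "(\<Prod>i<Suc r. LA x A i) \<le> 2 * d * 4^r * P" by simp
  have pf': "P \<le> 4^(r*r) * pp x f' r"
  proof -
    have "(4::real)^(r*r) * ((1/4)^(r*r) * P) = P" by (simp add: power_one_over)
    then show ?thesis using f'(3) unfolding P_def[symmetric]
      by (metis mult_left_mono zero_le_numeral zero_le_power)
  qed
  have "(1/4::real)^(Suc r * Suc r) * (\<Prod>i<Suc r. LA x A i) \<le> (1/4)^(Suc r * Suc r) * (2 * d * 4^r * P)"
    by (rule mult_left_mono[OF main]) simp
  also have "\<dots> \<le> (1/4)^(Suc r * Suc r) * (2 * d * 4^r * (4^(r*r) * pp x f' r))"
    using pf' d0 by (intro mult_left_mono) auto
  also have "\<dots> = 2 * (1/4)^(Suc r) * (d * pp x f' r)"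
  proof -
    have e: "Suc r * Suc r = r * r + r + Suc r" by simp
    have "(1/4::real)^(Suc r * Suc r) * 4^r * 4^(r*r) = (1/4)^(Suc r)"
      unfolding e power_add by (simp add: power_one_over field_simps)
    then show ?thesis by (simp add: field_simps)
  qed
  also have "\<dots> \<le> d * pp x f' r"
  proof -
    have "(1/4::real)^(Suc r) \<le> 1/4" by (simp add: power_le_one)
    then have h: "2 * (1/4::real)^(Suc r) \<le> 1" by simp
    moreover have "0 \<le> d * pp x f' r" using d0 unfolding pp_def by (simp add: prod_nonneg)
    ultimately have "2 * (1/4::real)^(Suc r) * (d * pp x f' r) \<le> 1 * (d * pp x f' r)"
      by (rule mult_right_mono)
    then show ?thesis by simp
  qed
  finally show ?case using finj fim ppf by auto
qed


inductive pf :: "nat \<Rightarrow> ((nat \<Rightarrow> complex) \<Rightarrow> complex) \<Rightarrow> bool" for n where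
  pf_const: "pf n (\<lambda>v. of_int c)"
| pf_var: "j < n \<Longrightarrow> pf n (\<lambda>v. v j)"
| pf_add: "pf n P \<Longrightarrow> pf n Q \<Longrightarrow> pf n (\<lambda>v. P v + Q v)"
| pf_mult: "pf n P \<Longrightarrow> pf n Q \<Longrightarrow> pf n (\<lambda>v. P v * Q v)"

lemma pf_nat: "pf n (\<lambda>v. of_nat k)"
  using pf_const[of n "int k"] by simp

lemma pf_zero: "pf n (\<lambda>v. 0)" using pf_const[of n 0] by simp
lemma pf_one: "pf n (\<lambda>v. 1)" using pf_const[of n 1] by simp

lemma pf_neg: "pf n P \<Longrightarrow> pf n (\<lambda>v. - P v)"
  using pf_mult[OF pf_const[of n "-1"]] by simp

lemma pf_diff: "pf n P \<Longrightarrow> pf n Q \<Longrightarrow> pf n (\<lambda>v. P v - Q v)"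
  using pf_add[OF _ pf_neg] by simp

lemma pf_pow: "pf n P \<Longrightarrow> pf n (\<lambda>v. P v ^ k)"
  by (induction k) (auto intro: pf_one pf_mult)

lemma pf_sum: "finite S \<Longrightarrow> (\<And>i. i \<in> S \<Longrightarrow> pf n (P i)) \<Longrightarrow> pf n (\<lambda>v. \<Sum>i\<in>S. P i v)"
  by (induction S rule: finite_induct) (auto intro: pf_zero pf_add)

lemma pf_prod: "finite S \<Longrightarrow> (\<And>i. i \<in> S \<Longrightarrow> pf n (P i)) \<Longrightarrow> pf n (\<lambda>v. \<Prod>i\<in>S. P i v)"
  by (induction S rule: finite_induct) (auto intro: pf_one pf_mult)

lemma pf_sum_list: "(\<And>i. i \<in> set xs \<Longrightarrow> pf n (P i)) \<Longrightarrow> pf n (\<lambda>v. \<Sum>i\<leftarrow>xs. P i v)"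
  by (induction xs) (auto intro: pf_zero pf_add)

lemma pf_comp: "pf m G \<Longrightarrow> (\<And>j. j < m \<Longrightarrow> pf n (H j)) \<Longrightarrow> pf n (\<lambda>v. G (\<lambda>j. H j v))"
  by (induction rule: pf.induct) (auto intro: pf.intros)

lemma pf_mono: "pf m P \<Longrightarrow> m \<le> n \<Longrightarrow> pf n P"
  by (induction rule: pf.induct) (auto intro: pf.intros)

lemma pf_cong: "pf n P \<Longrightarrow> (\<And>v. P v = Q v) \<Longrightarrow> pf n Q"
proof -
  assume "pf n P" "\<And>v. P v = Q v"
  then have "P = Q" by auto
  then show ?thesis using \<open>pf n P\<close> by simp
qed

definition mono :: "(nat \<Rightarrow> complex) \<Rightarrow> nat list \<Rightarrow> complex" where
  "mono v e = (\<Prod>j<length e. v j ^ (e ! j))"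

definition ext :: "nat list \<Rightarrow> nat \<Rightarrow> nat" where
  "ext e l = (if l < length e then e ! l else 0)"

lemma mono_ext: assumes "length e \<le> K" shows "mono v e = (\<Prod>j<K. v j ^ ext e j)"
proof -
  have "(\<Prod>j<K. v j ^ ext e j) = (\<Prod>j<length e. v j ^ ext e j)"
    by (rule prod.mono_neutral_right) (use assms in \<open>auto simp: ext_def\<close>)
  also have "\<dots> = mono v e" unfolding mono_def ext_def by simp
  finally show ?thesis by simp
qed

lemma mpoly_eval_Nil[simp]: "mpoly_eval [] v = 0" unfolding mpoly_eval_def by simp
lemma mpoly_eval_Cons[simp]: "mpoly_eval ((c, e) # p) v = of_int c * mono v e + mpoly_eval p v"
  unfolding mpoly_eval_def mono_def by simp
lemma mpoly_eval_append[simp]: "mpoly_eval (p @ q) v = mpoly_eval p v + mpoly_eval q v"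
  unfolding mpoly_eval_def by simp

definition eadd :: "nat list \<Rightarrow> nat list \<Rightarrow> nat list" where
  "eadd e1 e2 = map (\<lambda>l. ext e1 l + ext e2 l) [0..<max (length e1) (length e2)]"

lemma mono_eadd: "mono v (eadd e1 e2) = mono v e1 * mono v e2"
proof -
  define K where "K = max (length e1) (length e2)"
  have "mono v (eadd e1 e2) = (\<Prod>j<K. v j ^ (ext e1 j + ext e2 j))"
    unfolding mono_def eadd_def K_def by simp
  also have "\<dots> = (\<Prod>j<K. v j ^ ext e1 j) * (\<Prod>j<K. v j ^ ext e2 j)"
    by (simp add: power_add prod.distrib)
  also have "\<dots> = mono v e1 * mono v e2"
    using mono_ext[of e1 K v] mono_ext[of e2 K v] unfolding K_def by simp
  finally show ?thesis .
qed

fun mmul1 :: "int \<times> nat list \<Rightarrow> int_mpoly \<Rightarrow> int_mpoly" where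
  "mmul1 (c1, e1) [] = []"
| "mmul1 (c1, e1) ((c2, e2) # q) = (c1 * c2, eadd e1 e2) # mmul1 (c1, e1) q"

fun mmul :: "int_mpoly \<Rightarrow> int_mpoly \<Rightarrow> int_mpoly" where
  "mmul [] q = []"
| "mmul (m # p) q = mmul1 m q @ mmul p q"

lemma eval_mmul1: "mpoly_eval (mmul1 (c1, e1) q) v = of_int c1 * mono v e1 * mpoly_eval q v"
  by (induction q) (auto simp: mono_eadd algebra_simps)

lemma eval_mmul: "mpoly_eval (mmul p q) v = mpoly_eval p v * mpoly_eval q v"
  by (induction p) (auto simp: eval_mmul1 algebra_simps)

lemma vars_append: "mpoly_vars n (p @ q) \<longleftrightarrow> mpoly_vars n p \<and> mpoly_vars n q"
  unfolding mpoly_vars_def by auto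

lemma vars_mmul1: "length e1 \<le> n \<Longrightarrow> mpoly_vars n q \<Longrightarrow> mpoly_vars n (mmul1 (c1, e1) q)"
  by (induction q) (auto simp: mpoly_vars_def eadd_def)

lemma vars_mmul: "mpoly_vars n p \<Longrightarrow> mpoly_vars n q \<Longrightarrow> mpoly_vars n (mmul p q)"
proof (induction p)
  case Nil then show ?case by (simp add: mpoly_vars_def)
next
  case (Cons m p)
  obtain c e where m: "m = (c, e)" by force
  have "length e \<le> n" "mpoly_vars n p" using Cons.prems(1) m unfolding mpoly_vars_def by auto
  then show ?case using Cons m vars_mmul1 by (simp add: vars_append)
qed

lemma pf_mpoly: "pf n P \<Longrightarrow> \<exists>p. mpoly_vars n p \<and> (\<forall>v. P v = mpoly_eval p v)"
proof (induction rule: pf.induct)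
  case (pf_const c)
  show ?case by (rule exI[of _ "[(c, [])]"]) (simp add: mpoly_vars_def mono_def)
next
  case (pf_var j)
  have "mono v (replicate j 0 @ [1]) = v j" for v
    unfolding mono_def by (simp add: nth_append)
  then show ?case using pf_var
    by (intro exI[of _ "[(1, replicate j 0 @ [1])]"]) (simp add: mpoly_vars_def)
next
  case (pf_add P Q)
  then obtain p q where "mpoly_vars n p" "\<forall>v. P v = mpoly_eval p v" "mpoly_vars n q" "\<forall>v. Q v = mpoly_eval q v" by blast
  then show ?case by (intro exI[of _ "p @ q"]) (simp add: vars_append)
next
  case (pf_mult P Q)
  then obtain p q where "mpoly_vars n p" "\<forall>v. P v = mpoly_eval p v" "mpoly_vars n q" "\<forall>v. Q v = mpoly_eval q v" by blast
  then show ?case by (intro exI[of _ "mmul p q"]) (simp add: vars_mmul eval_mmul)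
qed


definition pw :: "nat \<Rightarrow> complex list \<Rightarrow> complex" where
  "pw m xs = (\<Sum>x\<leftarrow>xs. x ^ m)"

fun E :: "complex list \<Rightarrow> nat \<Rightarrow> complex" where
  "E [] i = (if i = 0 then 1 else 0)"
| "E (y # ys) 0 = 1"
| "E (y # ys) (Suc i) = E ys (Suc i) - y * E ys i"

lemma E_0[simp]: "E xs 0 = 1" by (cases xs) auto

lemma E_big: "length xs < i \<Longrightarrow> E xs i = 0"
proof (induction xs arbitrary: i)
  case Nil then show ?case by simp
next
  case (Cons y ys)
  then obtain j where "i = Suc j" by (cases i) auto
  then show ?case using Cons by auto
qed

lemma pw_Cons[simp]: "pw m (y # ys) = y ^ m + pw m ys" unfolding pw_def by simp
lemma pw_Nil[simp]: "pw m [] = 0" unfolding pw_def by simp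

lemma shift_lemma:
  "(\<Sum>i<Suc k. E (y # ys) i * q (Suc k - i)) =
     (\<Sum>i<Suc k. E ys i * q (Suc k - i)) - y * (\<Sum>i<k. E ys i * q (k - i))"
proof -
  have "(\<Sum>i<Suc k. E (y # ys) i * q (Suc k - i)) = q (Suc k) + (\<Sum>i<k. (E ys (Suc i) - y * E ys i) * q (k - i))"
    by (simp only: sum.lessThan_Suc_shift) simp
  also have "\<dots> = (q (Suc k) + (\<Sum>i<k. E ys (Suc i) * q (k - i))) - y * (\<Sum>i<k. E ys i * q (k - i))"
    by (simp add: algebra_simps sum_subtractf sum_distrib_left)
  also have "q (Suc k) + (\<Sum>i<k. E ys (Suc i) * q (k - i)) = (\<Sum>i<Suc k. E ys i * q (Suc k - i))"
    by (simp only: sum.lessThan_Suc_shift) simp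
  finally show ?thesis .
qed

lemma tele: "(\<Sum>i<Suc k. E (y # ys) i * y ^ (Suc k - i)) = y * E ys k"
proof (induction k)
  case 0 then show ?case by simp
next
  case (Suc k)
  have "(\<Sum>i<Suc (Suc k). E (y # ys) i * y ^ (Suc (Suc k) - i))
      = y * (\<Sum>i<Suc k. E (y # ys) i * y ^ (Suc k - i)) + E (y # ys) (Suc k) * y"
  proof -
    have "(\<Sum>i<Suc k. E (y # ys) i * y ^ (Suc (Suc k) - i)) = (\<Sum>i<Suc k. y * (E (y # ys) i * y ^ (Suc k - i)))"
      by (rule sum.cong) (auto simp: Suc_diff_le)
    have "(\<Sum>i<Suc (Suc k). E (y # ys) i * y ^ (Suc (Suc k) - i)) =
       (\<Sum>i<Suc k. E (y # ys) i * y ^ (Suc (Suc k) - i)) + E (y # ys) (Suc k) * y"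
      by (simp only: sum.lessThan_Suc) simp
    also have "\<dots> = y * (\<Sum>i<Suc k. E (y # ys) i * y ^ (Suc k - i)) + E (y # ys) (Suc k) * y"
      unfolding \<open>(\<Sum>i<Suc k. E (y # ys) i * y ^ (Suc (Suc k) - i)) = _\<close> sum_distrib_left ..
    finally show ?thesis .
  qed
  also have "\<dots> = y * E ys (Suc k)" using Suc by (simp add: algebra_simps)
  finally show ?case .
qed

lemma newton:
  "m \<ge> 1 \<Longrightarrow> (\<Sum>i<m. E xs i * pw (m - i) xs) + of_nat m * E xs m = 0"
proof (induction xs arbitrary: m)
  case Nil
  have "(\<Sum>i<m. E [] i * pw (m - i) []) = 0" by simp
  then show ?case using Nil by simp
next
  case (Cons y ys)
  then obtain k where m: "m = Suc k" by (cases m) auto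
  have N1: "(\<Sum>i<Suc k. E ys i * pw (Suc k - i) ys) = - (of_nat (Suc k) * E ys (Suc k))"
    using Cons.IH[of "Suc k"] by (simp add: eq_neg_iff_add_eq_0)
  have N0: "(\<Sum>i<k. E ys i * pw (k - i) ys) = - (of_nat k * E ys k)"
  proof (cases k)
    case 0 then show ?thesis by simp
  next
    case (Suc k')
    then show ?thesis using Cons.IH[of k] by (simp add: eq_neg_iff_add_eq_0)
  qed
  have split: "(\<Sum>i<Suc k. E (y # ys) i * pw (Suc k - i) (y # ys)) =
     (\<Sum>i<Suc k. E (y # ys) i * pw (Suc k - i) ys) + (\<Sum>i<Suc k. E (y # ys) i * y ^ (Suc k - i))"
    by (simp add: algebra_simps sum.distrib)
  have "(\<Sum>i<Suc k. E (y # ys) i * pw (Suc k - i) (y # ys)) + of_nat (Suc k) * E (y # ys) (Suc k)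
     = (- (of_nat (Suc k) * E ys (Suc k)) - y * (- (of_nat k * E ys k))) + y * E ys k
        + of_nat (Suc k) * (E ys (Suc k) - y * E ys k)"
    unfolding split shift_lemma[where k=k and y=y and ys=ys and q="\<lambda>j. pw j ys"] tele N1 N0 by simp
  also have "\<dots> = 0" by (simp add: algebra_simps)
  finally show ?case using m by simp
qed

lemma monic_of_Cons: "monic_of (y # ys) = [:-y, 1:] * monic_of ys"
  unfolding monic_of_def by simp

lemma coeff_lin_mult: "coeff ([:-(y::complex), 1:] * P) k = (if k = 0 then - y * coeff P 0 else coeff P (k - 1) - y * coeff P k)"
proof -
  have "[:-y, 1:] * P = smult (-y) P + pCons 0 P" by (simp add: mult_pCons_left)
  then show ?thesis by (cases k) auto
qed

lemma coeff_monic_of: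
  "coeff (monic_of xs) k = (if k \<le> length xs then E xs (length xs - k) else 0)"
proof (induction xs arbitrary: k)
  case Nil
  then show ?case by (simp add: monic_of_def coeff_1)  
next
  case (Cons y ys)
  define n where "n = length ys"
  have len: "length (y # ys) = Suc n" unfolding n_def by simp
  have cm: "coeff (monic_of (y # ys)) k = (if k = 0 then - y * coeff (monic_of ys) 0 else coeff (monic_of ys) (k - 1) - y * coeff (monic_of ys) k)"
    unfolding monic_of_Cons by (rule coeff_lin_mult)
  show ?case
  proof (cases k)
    case 0
    have "coeff (monic_of ys) 0 = E ys n" using Cons.IH[of 0] unfolding n_def by simp
    moreover have "E ys (Suc n) = 0" using E_big[of ys "Suc n"] unfolding n_def by simp
    ultimately show ?thesis using cm 0 len by simp
  next
    case (Suc j)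
    have c1: "coeff (monic_of ys) j = (if j \<le> n then E ys (n - j) else 0)" using Cons.IH[of j] n_def by simp
    have c2: "coeff (monic_of ys) (Suc j) = (if Suc j \<le> n then E ys (n - Suc j) else 0)" using Cons.IH[of "Suc j"] n_def by simp
    have cm': "coeff (monic_of (y # ys)) k = coeff (monic_of ys) j - y * coeff (monic_of ys) (Suc j)"
      using cm Suc by simp
    show ?thesis
    proof (cases "j \<le> n")
      case True
      show ?thesis
      proof (cases "j = n")
        case True
        have "coeff (monic_of (y # ys)) k = E ys 0" using cm' c1 c2 True by simp
        moreover have "Suc n - k = 0" using Suc True by simp
        ultimately show ?thesis using len Suc True by simp
      next
        case False
        then have nj: "n - j = Suc (n - Suc j)" using \<open>j \<le> n\<close> by simp
        have "coeff (monic_of (y # ys)) k = E ys (n - j) - y * E ys (n - Suc j)"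
          using cm' c1 c2 False \<open>j \<le> n\<close> by simp
        also have "\<dots> = E (y # ys) (n - j)" unfolding nj by simp
        finally show ?thesis using len Suc \<open>j \<le> n\<close> by simp
      qed
    next
      case False
      then show ?thesis using cm' c1 c2 len Suc by simp
    qed
  qed
qed

lemma acoeff_E: "i \<le> length xs \<Longrightarrow> acoeff xs i = E xs i"
  unfolding acoeff_def coeff_monic_of by simp

definition aval :: "complex list \<Rightarrow> nat \<Rightarrow> complex" where
  "aval xs = (\<lambda>j. acoeff xs (Suc j))"

definition EP :: "nat \<Rightarrow> nat \<Rightarrow> (nat \<Rightarrow> complex) \<Rightarrow> complex" where
  "EP N i v = (if i = 0 then 1 else if i \<le> N then v (i - 1) else 0)"

lemma EP_pf: "pf N (EP N i)"
proof -
  consider "i = 0" | "0 < i \<and> i \<le> N" | "N < i" by linarith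
  then show ?thesis
  proof cases
    case 1 then show ?thesis unfolding EP_def using pf_one by simp
  next
    case 2
    then have "i - 1 < N" by auto
    then show ?thesis unfolding EP_def using pf_var[of "i - 1" N] 2 by simp
  next
    case 3 then show ?thesis unfolding EP_def using pf_zero by simp
  qed
qed

lemma EP_E: "length xs = N \<Longrightarrow> E xs i = EP N i (aval xs)"
  unfolding EP_def aval_def using acoeff_E[of "i" xs] E_big[of xs i] by auto

lemma pw_pf: "\<exists>P. pf N P \<and> (\<forall>xs. length xs = N \<longrightarrow> pw m xs = P (aval xs))"
proof (induction m rule: less_induct)
  case (less m)
  show ?case
  proof (cases m)
    case 0
    have "pw 0 xs = of_nat (length xs)" for xs unfolding pw_def by (induction xs) auto
    then show ?thesis using 0 by (intro exI[of _ "\<lambda>v. of_nat N"]) (auto intro: pf_nat)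
  next
    case (Suc k)
    have "\<forall>j. \<exists>P. j < m \<longrightarrow> pf N P \<and> (\<forall>xs. length xs = N \<longrightarrow> pw j xs = P (aval xs))"
      using less by blast
    from choice[OF this] obtain PP where PP0: "\<forall>j. j < m \<longrightarrow> pf N (PP j) \<and> (\<forall>xs. length xs = N \<longrightarrow> pw j xs = PP j (aval xs))"
      by blast
    then have PP: "\<And>j. j < m \<Longrightarrow> pf N (PP j) \<and> (\<forall>xs. length xs = N \<longrightarrow> pw j xs = PP j (aval xs))"
      by blast
    define P where "P v = - (\<Sum>i<k. EP N (Suc i) v * PP (k - i) v) - of_nat (Suc k) * EP N (Suc k) v" for v
    have h1: "pf N (\<lambda>v. EP N (Suc i) v * PP (k - i) v)" if "i < k" for i
      using pf_mult[OF EP_pf[of N "Suc i"], of "PP (k - i)"] PP[of "k - i"] Suc that by auto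
    have h2: "pf N (\<lambda>v. \<Sum>i<k. EP N (Suc i) v * PP (k - i) v)"
      using pf_sum[of "{..<k}" N "\<lambda>i v. EP N (Suc i) v * PP (k - i) v"] h1 by auto
    have h3: "pf N (\<lambda>v. of_nat (Suc k) * EP N (Suc k) v)"
      using pf_mult[OF pf_nat EP_pf] by blast
    have "pf N P" unfolding P_def using pf_diff[OF pf_neg[OF h2] h3] by simp
    moreover have "pw m xs = P (aval xs)" if "length xs = N" for xs
    proof -
      have "(\<Sum>i<Suc k. E xs i * pw (Suc k - i) xs) + of_nat (Suc k) * E xs (Suc k) = 0"
        using newton[of "Suc k" xs] by simp
      then have "pw (Suc k) xs + (\<Sum>i<k. E xs (Suc i) * pw (k - i) xs) + of_nat (Suc k) * E xs (Suc k) = 0"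
        by (simp only: sum.lessThan_Suc_shift) simp
      then have "pw (Suc k) xs = - (\<Sum>i<k. E xs (Suc i) * pw (k - i) xs) - of_nat (Suc k) * E xs (Suc k)"
        by (simp add: algebra_simps eq_neg_iff_add_eq_0)
      also have "\<dots> = P (aval xs)" unfolding P_def using EP_E[OF that] PP Suc that by simp
      finally show ?thesis using Suc by simp
    qed
    ultimately show ?thesis by blast
  qed
qed


fun dll :: "nat \<Rightarrow> nat \<Rightarrow> nat list list" where
  "dll n 0 = [[]]"
| "dll n (Suc K) = concat (map (\<lambda>js. map (\<lambda>j. j # js) (filter (\<lambda>j. j \<notin> set js) [0..<n])) (dll n K))"

lemma dll_set: "set (dll n K) = {js. length js = K \<and> distinct js \<and> set js \<subseteq> {..<n}}"
proof (induction K)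
  case 0 then show ?case by auto
next
  case (Suc K)
  show ?case
  proof
    show "set (dll n (Suc K)) \<subseteq> {js. length js = Suc K \<and> distinct js \<and> set js \<subseteq> {..<n}}"
      using Suc by auto
  next
    show "{js. length js = Suc K \<and> distinct js \<and> set js \<subseteq> {..<n}} \<subseteq> set (dll n (Suc K))"
    proof
      fix js assume js: "js \<in> {js. length js = Suc K \<and> distinct js \<and> set js \<subseteq> {..<n}}"
      then obtain j js' where "js = j # js'" by (cases js) auto
      then show "js \<in> set (dll n (Suc K))" using js Suc by force
    qed
  qed
qed

lemma dll_ne: "K \<le> n \<Longrightarrow> dll n K \<noteq> []"
proof -
  assume "K \<le> n"
  then have "[0..<K] \<in> set (dll n K)" unfolding dll_set by auto
  then show ?thesis by auto
qed

definition monoL :: "complex list \<Rightarrow> nat list \<Rightarrow> nat list \<Rightarrow> complex" where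
  "monoL ys js e = (\<Prod>t<length e. (ys ! (js ! t)) ^ (e ! t))"

definition W :: "complex list \<Rightarrow> nat list \<Rightarrow> complex" where
  "W ys e = (\<Sum>js\<leftarrow>dll (length ys) (length e). monoL ys js e)"

lemma monoL_Cons: "monoL ys (j # js) (d # e) = (ys ! j) ^ d * monoL ys js e"
  unfolding monoL_def by (simp only: length_Cons prod.lessThan_Suc_shift nth_Cons_0 nth_Cons_Suc)

lemma sum_list_concat_map: "(\<Sum>x\<leftarrow>concat xss. f x) = (\<Sum>xs\<leftarrow>xss. \<Sum>x\<leftarrow>xs. f x)"
  by (induction xss) auto

lemma monoL_update:
  assumes "t < length e"
  shows "monoL ys js e * (ys ! (js ! t)) ^ d = monoL ys js (e[t := e ! t + d])"
proof -
  have "monoL ys js (e[t := e ! t + d]) = (\<Prod>s<length e. (ys ! (js ! s)) ^ (e ! s) * (if s = t then (ys ! (js ! s)) ^ d else 1))"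
    unfolding monoL_def by (rule prod.cong) (auto simp: nth_list_update power_add)
  also have "\<dots> = monoL ys js e * (\<Prod>s<length e. (if s = t then (ys ! (js ! s)) ^ d else 1))"
    unfolding monoL_def prod.distrib ..
  also have "(\<Prod>s<length e. (if s = t then (ys ! (js ! s)) ^ d else 1)) = (ys ! (js ! t)) ^ d"
    using assms by (simp add: prod.delta)
  finally show ?thesis by simp
qed

lemma sum_filter_notin:
  fixes f :: "nat \<Rightarrow> complex"
  assumes "distinct js" "set js \<subseteq> {..<n}"
  shows "(\<Sum>j\<leftarrow>filter (\<lambda>j. j \<notin> set js) [0..<n]. f j) = (\<Sum>j<n. f j) - (\<Sum>t<length js. f (js ! t))"
proof -
  have eqset: "set (filter (\<lambda>j. j \<notin> set js) [0..<n]) = {..<n} - set js" by auto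
  have s1: "(\<Sum>j\<leftarrow>filter (\<lambda>j. j \<notin> set js) [0..<n]. f j) = sum f (set (filter (\<lambda>j. j \<notin> set js) [0..<n]))"
    by (rule sum_list_distinct_conv_sum_set) simp
  have s2: "sum f ({..<n} - set js) = (\<Sum>j<n. f j) - (\<Sum>j\<in>set js. f j)"
    using assms(2) by (simp add: sum_diff)
  have s3: "(\<Sum>j\<in>set js. f j) = (\<Sum>t<length js. f (js ! t))"
    using assms(1) by (simp add: sum_list_distinct_conv_sum_set[symmetric] sum_list_sum_nth atLeast0LessThan)
  show ?thesis using s1 s2 s3 eqset by simp
qed

lemma pw_nth: "pw d ys = (\<Sum>j<length ys. (ys ! j) ^ d)"
  unfolding pw_def by (simp add: sum_list_sum_nth atLeast0LessThan)

lemma sum_list_sum_swap: "(\<Sum>x\<leftarrow>xs. \<Sum>t\<in>S. F x t) = (\<Sum>t\<in>S. \<Sum>x\<leftarrow>xs. (F x t :: complex))"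
  by (induction xs) (auto simp: sum.distrib)

lemma sum_list_diff_c: "(\<Sum>x\<leftarrow>xs. F x - G x) = (\<Sum>x\<leftarrow>xs. F x) - (\<Sum>x\<leftarrow>xs. (G x :: complex))"
  by (induction xs) auto

lemma sum_list_multc: "(\<Sum>x\<leftarrow>xs. F x * c) = (\<Sum>x\<leftarrow>xs. F x) * (c :: complex)"
  by (induction xs) (auto simp: algebra_simps)

lemma W_Cons:
  "W ys (d # e) = W ys e * pw d ys - (\<Sum>t<length e. W ys (e[t := e ! t + d]))"
proof -
  define n where "n = length ys"
  define K where "K = length e"
  have "W ys (d # e) = (\<Sum>js\<leftarrow>dll n K. \<Sum>j\<leftarrow>filter (\<lambda>j. j \<notin> set js) [0..<n]. monoL ys (j # js) (d # e))"
    unfolding W_def n_def[symmetric] K_def[symmetric] by (simp add: sum_list_concat_map comp_def K_def)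
  also have "\<dots> = (\<Sum>js\<leftarrow>dll n K. monoL ys js e * (pw d ys - (\<Sum>t<K. (ys ! (js ! t)) ^ d)))"
  proof (rule arg_cong[where f = sum_list], rule map_cong[OF refl])
    fix js assume "js \<in> set (dll n K)"
    then have js: "length js = K" "distinct js" "set js \<subseteq> {..<n}" unfolding dll_set by auto
    have "(\<Sum>j\<leftarrow>filter (\<lambda>j. j \<notin> set js) [0..<n]. monoL ys (j # js) (d # e))
        = (\<Sum>j\<leftarrow>filter (\<lambda>j. j \<notin> set js) [0..<n]. monoL ys js e * (ys ! j) ^ d)"
      by (simp add: monoL_Cons mult.commute)
    also have "\<dots> = monoL ys js e * (\<Sum>j\<leftarrow>filter (\<lambda>j. j \<notin> set js) [0..<n]. (ys ! j) ^ d)"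
      by (simp add: sum_list_const_mult)
    also have "\<dots> = monoL ys js e * (pw d ys - (\<Sum>t<K. (ys ! (js ! t)) ^ d))"
      using sum_filter_notin[OF js(2) js(3), of "\<lambda>j. (ys ! j) ^ d"] js(1) pw_nth[of d ys] n_def by simp
    finally show "(\<Sum>j\<leftarrow>filter (\<lambda>j. j \<notin> set js) [0..<n]. monoL ys (j # js) (d # e))
        = monoL ys js e * (pw d ys - (\<Sum>t<K. (ys ! (js ! t)) ^ d))" .
  qed
  also have "\<dots> = (\<Sum>js\<leftarrow>dll n K. monoL ys js e * pw d ys - (\<Sum>t<K. monoL ys js (e[t := e ! t + d])))"
    by (rule arg_cong[where f = sum_list], rule map_cong[OF refl])
       (simp add: right_diff_distrib sum_distrib_left monoL_update K_def)
  also have "\<dots> = W ys e * pw d ys - (\<Sum>t<K. W ys (e[t := e ! t + d]))"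
    unfolding W_def n_def[symmetric] K_def[symmetric]
    by (simp only: sum_list_diff_c sum_list_multc sum_list_sum_swap) (simp add: K_def)
  finally show ?thesis unfolding K_def .
qed


lemma sum_list_update_nat: "t < length e \<Longrightarrow> sum_list (e[t := e ! t + d]) = sum_list e + (d::nat)"
proof (induction e arbitrary: t)
  case Nil then show ?case by simp
next
  case (Cons a e)
  then show ?case by (cases t) auto
qed

lemma W_pf: "\<exists>G. pf (Suc (sum_list e)) G \<and> (\<forall>ys. W ys e = G (\<lambda>j. pw j ys))"
proof (induction "length e" arbitrary: e)
  case 0
  then have "e = []" by simp
  then have "W ys e = 1" for ys unfolding W_def monoL_def by simp
  then show ?case using pf_one by blast
next
  case (Suc K)
  then obtain d e' where e: "e = d # e'" by (cases e) auto
  have lK: "length e' = K" using Suc.hyps(2) e by simp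
  obtain G0 where G0: "pf (Suc (sum_list e')) G0" "\<forall>ys. W ys e' = G0 (\<lambda>j. pw j ys)"
    using Suc.hyps(1)[of e'] lK by blast
  have "\<forall>t. \<exists>G. t < K \<longrightarrow> pf (Suc (sum_list (e'[t := e' ! t + d]))) G \<and> (\<forall>ys. W ys (e'[t := e' ! t + d]) = G (\<lambda>j. pw j ys))"
    using Suc.hyps(1) lK by simp
  from choice[OF this] obtain GG where GG: "\<forall>t. t < K \<longrightarrow> pf (Suc (sum_list (e'[t := e' ! t + d]))) (GG t) \<and> (\<forall>ys. W ys (e'[t := e' ! t + d]) = GG t (\<lambda>j. pw j ys))"
    by blast
  define S where "S = sum_list e"
  have S: "S = d + sum_list e'" unfolding S_def e by simp
  define G where "G v = G0 v * v d - (\<Sum>t<K. GG t v)" for v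
  have p1: "pf (Suc S) G0" using pf_mono[OF G0(1)] S by simp
  have p2: "pf (Suc S) (\<lambda>v. v d)" using pf_var[of d "Suc S"] S by simp
  have p3: "pf (Suc S) (GG t)" if "t < K" for t
  proof -
    have eq: "sum_list (e'[t := e' ! t + d]) = S" using sum_list_update_nat[of t e' d] lK S that by simp
    from GG that have "pf (Suc (sum_list (e'[t := e' ! t + d]))) (GG t)" by blast
    then show ?thesis unfolding eq .
  qed
  have "pf (Suc S) G" unfolding G_def
    using pf_diff[OF pf_mult[OF p1 p2] pf_sum[of "{..<K}" "Suc S" GG]] p3 by simp
  moreover have "W ys e = G (\<lambda>j. pw j ys)" for ys
    unfolding e W_Cons G_def using G0(2) GG lK by simp
  ultimately show ?case unfolding S_def by blast
qed

lemma monoL_pad: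
  assumes "length e \<le> K"
  shows "mono (\<lambda>t. ys ! (js ! t)) e = monoL ys js (map (ext e) [0..<K])"
  unfolding mono_ext[OF assms] monoL_def by simp

lemma sum_g: assumes "pf K g"
  shows "\<exists>m G. pf m G \<and> (\<forall>ys. (\<Sum>js\<leftarrow>dll (length ys) K. g (\<lambda>t. ys ! (js ! t))) = G (\<lambda>j. pw j ys))"
proof -
  obtain p where p: "mpoly_vars K p" "\<forall>v. g v = mpoly_eval p v" using pf_mpoly[OF assms] by blast
  have "\<exists>m G. pf m G \<and> (\<forall>ys. (\<Sum>js\<leftarrow>dll (length ys) K. mpoly_eval p (\<lambda>t. ys ! (js ! t))) = G (\<lambda>j. pw j ys))"
    using p(1)
  proof (induction p)
    case Nil
    then show ?case using pf_zero by (intro exI[of _ 0]) auto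
  next
    case (Cons ce p)
    obtain c e where ce: "ce = (c, e)" by force
    have le: "length e \<le> K" and vp: "mpoly_vars K p" using Cons.prems ce unfolding mpoly_vars_def by auto
    obtain m1 G1 where G1: "pf m1 G1" "\<forall>ys. (\<Sum>js\<leftarrow>dll (length ys) K. mpoly_eval p (\<lambda>t. ys ! (js ! t))) = G1 (\<lambda>j. pw j ys)"
      using Cons.IH[OF vp] by blast
    define e' where "e' = map (ext e) [0..<K]"
    obtain Gw where Gw: "pf (Suc (sum_list e')) Gw" "\<forall>ys. W ys e' = Gw (\<lambda>j. pw j ys)"
      using W_pf by blast
    define M where "M = max m1 (Suc (sum_list e'))"
    define G where "G v = of_int c * Gw v + G1 v" for v
    have "pf M G" unfolding G_def
      using pf_add[OF pf_mult[OF pf_const pf_mono[OF Gw(1)]] pf_mono[OF G1(1)]] M_def by simp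
    moreover have "(\<Sum>js\<leftarrow>dll (length ys) K. mpoly_eval (ce # p) (\<lambda>t. ys ! (js ! t))) = G (\<lambda>j. pw j ys)" for ys
    proof -
      have "(\<Sum>js\<leftarrow>dll (length ys) K. mpoly_eval (ce # p) (\<lambda>t. ys ! (js ! t)))
          = (\<Sum>js\<leftarrow>dll (length ys) K. of_int c * monoL ys js e' + mpoly_eval p (\<lambda>t. ys ! (js ! t)))"
        unfolding ce mpoly_eval_Cons monoL_pad[OF le] e'_def ..
      also have "\<dots> = of_int c * W ys e' + (\<Sum>js\<leftarrow>dll (length ys) K. mpoly_eval p (\<lambda>t. ys ! (js ! t)))"
        unfolding W_def by (simp add: sum_list_addf sum_list_const_mult e'_def)
      also have "\<dots> = G (\<lambda>j. pw j ys)" unfolding G_def using Gw(2) G1(2) by simp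
      finally show ?thesis .
    qed
    ultimately show ?case by blast
  qed
  then show ?thesis using p(2) by simp
qed

lemma pf_agree: "pf n P \<Longrightarrow> (\<And>j. j < n \<Longrightarrow> v j = w j) \<Longrightarrow> P v = P w"
  by (induction rule: pf.induct) auto

lemma E_from_pw:
  assumes H: "\<And>m. \<exists>H. pf n H \<and> (\<forall>z\<in>D. pw m (Ys z) = H (val z))"
  shows "\<exists>F. pf n F \<and> (\<forall>z\<in>D. of_nat (fact q) * E (Ys z) q = F (val z))"
proof (induction q rule: less_induct)
  case (less q)
  show ?case
  proof (cases q)
    case 0
    then show ?thesis using pf_one by (intro exI[of _ "\<lambda>v. 1"]) auto
  next
    case (Suc k)
    have "\<forall>i. \<exists>F. i < q \<longrightarrow> pf n F \<and> (\<forall>z\<in>D. of_nat (fact i) * E (Ys z) i = F (val z))"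
      using less by blast
    from choice[OF this] obtain FF where FF: "\<And>i. i < q \<Longrightarrow> pf n (FF i) \<and> (\<forall>z\<in>D. of_nat (fact i) * E (Ys z) i = FF i (val z))"
      by blast
    have "\<forall>m. \<exists>H. pf n H \<and> (\<forall>z\<in>D. pw m (Ys z) = H (val z))" using H by blast
    from choice[OF this] obtain HH where HH: "\<And>m. pf n (HH m) \<and> (\<forall>z\<in>D. pw m (Ys z) = HH m (val z))"
      by blast
    define F where "F v = - (\<Sum>i<Suc k. of_nat (fact k div fact i) * FF i v * HH (Suc k - i) v)" for v
    have "pf n F" unfolding F_def
    proof (intro pf_neg pf_sum)
      fix i assume "i \<in> {..<Suc k}"
      then have "pf n (FF i)" using FF Suc by auto
      then show "pf n (\<lambda>v. of_nat (fact k div fact i) * FF i v * HH (Suc k - i) v)"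
        using pf_mult[OF pf_mult[OF pf_nat[of n "fact k div fact i"] \<open>pf n (FF i)\<close>] HH[THEN conjunct1, of "Suc k - i"]] by simp
    qed auto
    moreover have "of_nat (fact q) * E (Ys z) q = F (val z)" if z: "z \<in> D" for z
    proof -
      let ?Y = "Ys z"
      have nw: "(\<Sum>i<Suc k. E ?Y i * pw (Suc k - i) ?Y) + of_nat (Suc k) * E ?Y (Suc k) = 0"
        using newton[of "Suc k" ?Y] by simp
      have "of_nat (fact (Suc k)) * E ?Y (Suc k) = of_nat (fact k) * (of_nat (Suc k) * E ?Y (Suc k))"
        by (simp add: algebra_simps)
      also have "\<dots> = - (of_nat (fact k) * (\<Sum>i<Suc k. E ?Y i * pw (Suc k - i) ?Y))"
      proof -
        have B: "of_nat (Suc k) * E ?Y (Suc k) = - (\<Sum>i<Suc k. E ?Y i * pw (Suc k - i) ?Y)"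
          using nw by (metis add.commute add_eq_0_iff)
        show ?thesis unfolding B by (simp only: mult_minus_right)
      qed
      also have "of_nat (fact k) * (\<Sum>i<Suc k. E ?Y i * pw (Suc k - i) ?Y)
          = (\<Sum>i<Suc k. of_nat (fact k div fact i) * (of_nat (fact i) * E ?Y i) * pw (Suc k - i) ?Y)"
        unfolding sum_distrib_left
      proof (rule sum.cong[OF refl])
        fix i assume "i \<in> {..<Suc k}"
        then have "fact i dvd (fact k :: nat)" by (simp add: fact_dvd)
        then have "(of_nat (fact k) :: complex) = of_nat (fact k div fact i) * of_nat (fact i)"
          by (metis dvd_div_mult_self of_nat_mult)
        then show "of_nat (fact k) * (E ?Y i * pw (Suc k - i) ?Y) = of_nat (fact k div fact i) * (of_nat (fact i) * E ?Y i) * pw (Suc k - i) ?Y"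
          by (simp add: algebra_simps)
      qed
      also have "\<dots> = (\<Sum>i<Suc k. of_nat (fact k div fact i) * FF i (val z) * HH (Suc k - i) (val z))"
        using FF HH z Suc by (intro sum.cong) auto
      finally show ?thesis unfolding F_def using Suc by simp
    qed
    ultimately show ?thesis by blast
  qed
qed


definition Rp :: "complex list \<Rightarrow> complex \<Rightarrow> complex" where
  "Rp ys y = (\<Sum>q\<le>length ys. E ys q * y ^ (length ys - q))"

lemma Rp_Cons: "Rp (a # ys) y = (y - a) * Rp ys y"
proof -
  define n where "n = length ys"
  have "Rp (a # ys) y = (\<Sum>q\<le>Suc n. E (a # ys) q * y ^ (Suc n - q))" unfolding Rp_def n_def by simp
  also have "\<dots> = y ^ Suc n + (\<Sum>q\<le>n. (E ys (Suc q) - a * E ys q) * y ^ (n - q))"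
    by (simp only: sum.atMost_Suc_shift) simp
  also have "\<dots> = (y ^ Suc n + (\<Sum>q\<le>n. E ys (Suc q) * y ^ (n - q))) - a * Rp ys y"
    unfolding Rp_def n_def[symmetric] by (simp add: algebra_simps sum_subtractf sum_distrib_left)
  also have "y ^ Suc n + (\<Sum>q\<le>n. E ys (Suc q) * y ^ (n - q)) = y * Rp ys y"
  proof -
    have "y * Rp ys y = (\<Sum>q\<le>n. E ys q * y ^ (Suc n - q))"
      unfolding Rp_def n_def[symmetric] sum_distrib_left
      by (rule sum.cong) (auto simp: Suc_diff_le)
    also have "\<dots> = (\<Sum>q\<le>Suc n. E ys q * y ^ (Suc n - q))"
      using E_big[of ys "Suc n"] n_def by simp
    also have "\<dots> = y ^ Suc n + (\<Sum>q\<le>n. E ys (Suc q) * y ^ (n - q))"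
      by (simp only: sum.atMost_Suc_shift) simp
    finally show ?thesis by simp
  qed
  finally show ?thesis by (simp add: algebra_simps)
qed

lemma Rp_root: "y \<in> set ys \<Longrightarrow> Rp ys y = 0"
  by (induction ys) (auto simp: Rp_Cons)

lemma geo_half: "(\<Sum>q\<in>{1..M}. (1/2::real) ^ q) = 1 - (1/2) ^ M"
  by (induction M) (auto simp: algebra_simps)

lemma root_bound:
  assumes y: "y \<in> set Ys" and T: "0 \<le> T" and bnd: "\<And>q. q \<in> {1..length Ys} \<Longrightarrow> cmod (E Ys q) \<le> T ^ q"
  shows "cmod y \<le> 2 * T"
proof (rule ccontr)
  assume "\<not> ?thesis"
  then have bT: "2 * T < cmod y" by simp
  define b where "b = cmod y"
  define M where "M = length Ys"
  have b0: "0 < b" using bT T unfolding b_def by linarith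
  have "Rp Ys y = 0" using Rp_root[OF y] .
  then have "(\<Sum>q\<le>M. E Ys q * y ^ (M - q)) = 0" unfolding Rp_def M_def .
  moreover have "{..M} = insert 0 {1..M}" by auto
  ultimately have "y ^ M + (\<Sum>q\<in>{1..M}. E Ys q * y ^ (M - q)) = 0" by simp
  then have e: "y ^ M = - (\<Sum>q\<in>{1..M}. E Ys q * y ^ (M - q))" by (simp add: eq_neg_iff_add_eq_0)
  have "cmod (y ^ M) = cmod (\<Sum>q\<in>{1..M}. E Ys q * y ^ (M - q))" unfolding e norm_minus_cancel ..
  then have "b ^ M = cmod (\<Sum>q\<in>{1..M}. E Ys q * y ^ (M - q))" unfolding b_def by (simp add: norm_power)
  also have "\<dots> \<le> (\<Sum>q\<in>{1..M}. cmod (E Ys q) * b ^ (M - q))"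
    using norm_sum[of "\<lambda>q. E Ys q * y ^ (M - q)" "{1..M}"] unfolding b_def by (simp add: norm_mult norm_power)
  also have "\<dots> \<le> (\<Sum>q\<in>{1..M}. (b / 2) ^ q * b ^ (M - q))"
  proof (rule sum_mono)
    fix q assume q: "q \<in> {1..M}"
    have "cmod (E Ys q) \<le> T ^ q" using bnd q unfolding M_def by simp
    also have "\<dots> \<le> (b / 2) ^ q" using T bT unfolding b_def by (intro power_mono) auto
    finally show "cmod (E Ys q) * b ^ (M - q) \<le> (b / 2) ^ q * b ^ (M - q)"
      using b0 by (intro mult_right_mono) auto
  qed
  also have "\<dots> = (\<Sum>q\<in>{1..M}. (1/2) ^ q) * b ^ M"
    unfolding sum_distrib_right
  proof (rule sum.cong[OF refl])
    fix q assume "q \<in> {1..M}"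
    then have "b ^ M = b ^ q * b ^ (M - q)" by (simp add: power_add[symmetric])
    then show "(b / 2) ^ q * b ^ (M - q) = (1 / 2) ^ q * b ^ M" by (simp add: power_divide field_simps)
  qed
  also have "\<dots> = b ^ M - (1/2) ^ M * b ^ M" unfolding geo_half by (simp add: algebra_simps)
  finally have "(1/2::real) ^ M * b ^ M \<le> 0" by simp
  moreover have "0 < (1/2::real) ^ M * b ^ M" using b0 by simp
  ultimately show False by simp
qed

lemma E_bound:
  assumes "\<And>y. y \<in> set ys \<Longrightarrow> cmod y \<le> B" "0 \<le> B"
  shows "cmod (E ys q) \<le> 2 ^ length ys * B ^ q"
  using assms(1)
proof (induction ys arbitrary: q)
  case Nil then show ?case using assms(2) by simp
next
  case (Cons y ys)
  show ?case
  proof (cases q)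
    case 0
    have "(1::real) \<le> 2 ^ length (y # ys)" by (rule one_le_power) simp
    then show ?thesis using 0 by simp
  next
    case (Suc i)
    have IH: "\<And>q. cmod (E ys q) \<le> 2 ^ length ys * B ^ q" using Cons by simp
    have h1: "cmod (E ys (Suc i)) \<le> 2 ^ length ys * B ^ Suc i" by (rule IH)
    have h2: "cmod (E ys i) \<le> 2 ^ length ys * B ^ i" by (rule IH)
    have hy: "cmod y \<le> B" using Cons.prems by simp
    have "cmod (E (y # ys) q) \<le> cmod (E ys (Suc i)) + cmod y * cmod (E ys i)"
      using Suc norm_triangle_ineq4[of "E ys (Suc i)" "y * E ys i"] by (simp add: norm_mult)
    also have "\<dots> \<le> 2 ^ length ys * B ^ Suc i + B * (2 ^ length ys * B ^ i)"
      using h1 h2 hy assms(2) by (intro add_mono mult_mono) auto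
    also have "\<dots> = 2 ^ length (y # ys) * B ^ q" using Suc by simp
    finally show ?thesis .
  qed
qed

definition Ssum :: "complex list \<Rightarrow> real" where
  "Ssum Ys = (\<Sum>i=1..length Ys. cmod (of_nat (fact i) * E Ys i) powr (1 / real i))"

lemma powr_inv_pow: assumes "0 \<le> a" "i \<ge> 1" shows "(a powr (1 / real i)) ^ i = a"
proof (cases "a = 0")
  case True then show ?thesis using assms by simp
next
  case False
  then have a0: "0 < a" using assms by simp
  have "(a powr (1 / real i)) ^ i = (a powr (1 / real i)) powr (real i)"
    using a0 by (simp add: powr_realpow)
  also have "\<dots> = a powr (1 / real i * real i)" by (simp add: powr_powr)
  also have "\<dots> = a" using assms a0 by simp
  finally show ?thesis .
qed

lemma max_le_Ssum:
  assumes "y \<in> set Ys"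
  shows "cmod y \<le> 2 * Ssum Ys"
proof (rule root_bound[OF assms])
  show "0 \<le> Ssum Ys" unfolding Ssum_def by (intro sum_nonneg) auto
  fix q assume q: "q \<in> {1..length Ys}"
  have f1: "1 \<le> real (fact q)" by simp
  have "1 * cmod (E Ys q) \<le> real (fact q) * cmod (E Ys q)"
    by (rule mult_right_mono[OF f1]) simp
  then have "cmod (E Ys q) \<le> cmod (of_nat (fact q) * E Ys q)"
    by (simp add: norm_mult)
  also have "\<dots> = (cmod (of_nat (fact q) * E Ys q) powr (1 / real q)) ^ q"
    using q by (simp add: powr_inv_pow)
  also have "\<dots> \<le> Ssum Ys ^ q"
  proof (rule power_mono)
    show "cmod (of_nat (fact q) * E Ys q) powr (1 / real q) \<le> Ssum Ys"
      unfolding Ssum_def using q by (intro member_le_sum) auto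
  qed simp
  finally show "cmod (E Ys q) \<le> Ssum Ys ^ q" .
qed

lemma Ssum_le_max:
  assumes "\<And>y. y \<in> set Ys \<Longrightarrow> cmod y \<le> B" "0 \<le> B"
  shows "Ssum Ys \<le> real (length Ys) * (real (fact (length Ys)) * 2 ^ length Ys) * B"
proof -
  define M where "M = length Ys"
  define K where "K = real (fact M) * 2 ^ M"
  have f1: "1 \<le> real (fact M)" by simp
  have f2: "1 \<le> (2::real) ^ M" by simp
  have "1 * 1 \<le> real (fact M) * 2 ^ M" by (rule mult_mono[OF f1 f2]) auto
  then have K1: "1 \<le> K" unfolding K_def by simp
  have "Ssum Ys \<le> (\<Sum>i=1..M. K * B)" unfolding Ssum_def M_def[symmetric]
  proof (rule sum_mono)
    fix i assume i: "i \<in> {1..M}"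
    have "cmod (of_nat (fact i) * E Ys i) \<le> real (fact i) * (2 ^ M * B ^ i)"
      using E_bound[OF assms, where q=i] unfolding M_def by (simp add: norm_mult)
    also have "\<dots> \<le> K * B ^ i" unfolding K_def
    proof -
      have "real (fact i) \<le> real (fact M)" using i by (simp add: fact_mono)
      then show "real (fact i) * (2 ^ M * B ^ i) \<le> real (fact M) * 2 ^ M * B ^ i"
        using assms(2) by (simp add: mult.assoc mult_right_mono)
    qed
    finally have le: "cmod (of_nat (fact i) * E Ys i) \<le> K * B ^ i" .
    have "cmod (of_nat (fact i) * E Ys i) powr (1 / real i) \<le> (K * B ^ i) powr (1 / real i)"
      by (rule powr_mono2) (use le in auto)
    also have "\<dots> = K powr (1 / real i) * (B ^ i) powr (1 / real i)"
      using K1 assms(2) by (simp add: powr_mult)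
    also have "(B ^ i) powr (1 / real i) = B"
    proof -
      have "(B ^ i) powr (1 / real i) = (B powr real i) powr (1 / real i)"
        using assms(2) i by (cases "B = 0") (auto simp: powr_realpow)
      also have "\<dots> = B" using assms(2) i by (simp add: powr_powr)
      finally show ?thesis .
    qed
    also have "K powr (1 / real i) \<le> K powr 1"
      using K1 i by (intro powr_mono) auto
    also have "K powr 1 = K" using K1 by simp
    finally show "cmod (of_nat (fact i) * E Ys i) powr (1 / real i) \<le> K * B"
      using assms(2) by (simp add: mult_right_mono)
  qed
  also have "\<dots> = real M * (K * B)" by simp
  finally show ?thesis unfolding K_def M_def by (simp add: mult.assoc)
qed


lemma mset_nth: "mset xs = image_mset (nth xs) (mset_set {..<length xs})"
proof -
  have "mset xs = mset (map (nth xs) [0..<length xs])" by (simp add: map_nth)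
  also have "\<dots> = image_mset (nth xs) (mset_set {..<length xs})" by (simp add: atLeast0LessThan)
  finally show ?thesis .
qed

lemma sub_mset_set: assumes "B \<subseteq># mset_set U" "finite U"
  shows "B = mset_set (set_mset B) \<and> set_mset B \<subseteq> U"
proof
  show "B = mset_set (set_mset B)"
  proof (rule multiset_eqI)
    fix a
    have c: "count B a \<le> count (mset_set U) a" using assms(1) by (simp add: mset_subset_eq_count)
    have "count (mset_set U) a \<le> 1" using assms(2) by (simp add: count_mset_set')
    then have "count B a \<le> 1" using c by linarith
    show "count B a = count (mset_set (set_mset B)) a"
    proof (cases "a \<in># B")
      case True
      then have "0 < count B a" by simp
      then have "count B a = 1" using \<open>count B a \<le> 1\<close> by linarith
      then show ?thesis using True by (simp add: count_mset_set')
    next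
      case False
      then show ?thesis by (simp add: count_mset_set' not_in_iff)
    qed
  qed
  show "set_mset B \<subseteq> U" using set_mset_mono[OF assms(1)] assms(2) by simp
qed

lemma sub_mset_char:
  assumes "T \<subseteq># mset xs"
  shows "\<exists>I. I \<subseteq> {..<length xs} \<and> T = image_mset (nth xs) (mset_set I)"
proof -
  have "T \<subseteq># image_mset (nth xs) (mset_set {..<length xs})" using assms mset_nth by metis
  then obtain C where "image_mset (nth xs) (mset_set {..<length xs}) = T + C"
    using subset_mset.le_iff_add by blast
  then obtain B' C' where BC: "mset_set {..<length xs} = B' + C'" "T = image_mset (nth xs) B'"
    using image_mset_eq_plusD by blast
  then have "B' \<subseteq># mset_set {..<length xs}" by simp
  then have "B' = mset_set (set_mset B')" "set_mset B' \<subseteq> {..<length xs}" using sub_mset_set by auto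
  then show ?thesis using BC by metis
qed

lemma diam_image: "finite I \<Longrightarrow> diam (image_mset x (mset_set I)) = Dd x I"
proof -
  assume fI: "finite I"
  have "{cmod (a - b) |a b. a \<in># image_mset x (mset_set I) \<and> b \<in># image_mset x (mset_set I)}
      = {cmod (x i - x j) |i j. i \<in> I \<and> j \<in> I}" using fI by auto
  then show ?thesis unfolding diam_def Dd_def by simp
qed

lemma image_sub: "I \<subseteq> {..<length xs} \<Longrightarrow> image_mset (nth xs) (mset_set I) \<subseteq># mset xs"
  unfolding mset_nth by (rule image_mset_subseteq_mono) (simp add: subset_imp_msubset_mset_set)

lemma Labs_LA: "Labs xs k = LA (nth xs) {..<length xs} k"
proof -
  have "{diam T | T. T \<subseteq># mset xs \<and> size T = length xs - k}
      = {Dd (nth xs) I | I. I \<subseteq> {..<length xs} \<and> card I = card {..<length xs} - k}"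
  proof
    show "{diam T | T. T \<subseteq># mset xs \<and> size T = length xs - k}
      \<subseteq> {Dd (nth xs) I | I. I \<subseteq> {..<length xs} \<and> card I = card {..<length xs} - k}"
    proof
      fix z assume "z \<in> {diam T | T. T \<subseteq># mset xs \<and> size T = length xs - k}"
      then obtain T where T: "z = diam T" "T \<subseteq># mset xs" "size T = length xs - k" by blast
      obtain I where I: "I \<subseteq> {..<length xs}" "T = image_mset (nth xs) (mset_set I)" using sub_mset_char[OF T(2)] by blast
      have fI: "finite I" using I(1) finite_subset by blast
      have "z = Dd (nth xs) I" using T I diam_image[OF fI] by simp
      moreover have "card I = card {..<length xs} - k" using T(3) I(2) by simp
      ultimately show "z \<in> {Dd (nth xs) I | I. I \<subseteq> {..<length xs} \<and> card I = card {..<length xs} - k}"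
        using I(1) by blast
    qed
  next
    show "{Dd (nth xs) I | I. I \<subseteq> {..<length xs} \<and> card I = card {..<length xs} - k}
      \<subseteq> {diam T | T. T \<subseteq># mset xs \<and> size T = length xs - k}"
    proof
      fix z assume "z \<in> {Dd (nth xs) I | I. I \<subseteq> {..<length xs} \<and> card I = card {..<length xs} - k}"
      then obtain I where I: "z = Dd (nth xs) I" "I \<subseteq> {..<length xs}" "card I = card {..<length xs} - k" by blast
      have fI: "finite I" using I(2) finite_subset by blast
      let ?T = "image_mset (nth xs) (mset_set I)"
      have "z = diam ?T" using I diam_image[OF fI] by simp
      moreover have "?T \<subseteq># mset xs" using image_sub[OF I(2)] .
      moreover have "size ?T = length xs - k" using I(3) by simp
      ultimately show "z \<in> {diam T | T. T \<subseteq># mset xs \<and> size T = length xs - k}" by blast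
    qed
  qed
  then show ?thesis unfolding Labs_def LA_def by simp
qed

lemma Lloc_LL: "Lloc xs k a = LL (nth xs) {..<length xs} k a"
proof -
  have "{diam T | T. T \<subseteq># mset xs \<and> size T = length xs - k \<and> a \<in># T}
      = {Dd (nth xs) I | I. I \<subseteq> {..<length xs} \<and> card I = card {..<length xs} - k \<and> (\<exists>i\<in>I. xs ! i = a)}"
  proof
    show "{diam T | T. T \<subseteq># mset xs \<and> size T = length xs - k \<and> a \<in># T}
      \<subseteq> {Dd (nth xs) I | I. I \<subseteq> {..<length xs} \<and> card I = card {..<length xs} - k \<and> (\<exists>i\<in>I. xs ! i = a)}"
    proof
      fix z assume "z \<in> {diam T | T. T \<subseteq># mset xs \<and> size T = length xs - k \<and> a \<in># T}"
      then obtain T where T: "z = diam T" "T \<subseteq># mset xs" "size T = length xs - k" "a \<in># T" by blast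
      obtain I where I: "I \<subseteq> {..<length xs}" "T = image_mset (nth xs) (mset_set I)" using sub_mset_char[OF T(2)] by blast
      have fI: "finite I" using I(1) finite_subset by blast
      have "z = Dd (nth xs) I" using T I diam_image[OF fI] by simp
      moreover have "card I = card {..<length xs} - k" using T(3) I(2) by simp
      moreover have "\<exists>i\<in>I. xs ! i = a" using T(4) I(2) fI by auto
      ultimately show "z \<in> {Dd (nth xs) I | I. I \<subseteq> {..<length xs} \<and> card I = card {..<length xs} - k \<and> (\<exists>i\<in>I. xs ! i = a)}"
        using I(1) by blast
    qed
  next
    show "{Dd (nth xs) I | I. I \<subseteq> {..<length xs} \<and> card I = card {..<length xs} - k \<and> (\<exists>i\<in>I. xs ! i = a)}
      \<subseteq> {diam T | T. T \<subseteq># mset xs \<and> size T = length xs - k \<and> a \<in># T}"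
    proof
      fix z assume "z \<in> {Dd (nth xs) I | I. I \<subseteq> {..<length xs} \<and> card I = card {..<length xs} - k \<and> (\<exists>i\<in>I. xs ! i = a)}"
      then obtain I where I: "z = Dd (nth xs) I" "I \<subseteq> {..<length xs}" "card I = card {..<length xs} - k" "\<exists>i\<in>I. xs ! i = a" by blast
      have fI: "finite I" using I(2) finite_subset by blast
      let ?T = "image_mset (nth xs) (mset_set I)"
      have "z = diam ?T" using I diam_image[OF fI] by simp
      moreover have "?T \<subseteq># mset xs" using image_sub[OF I(2)] .
      moreover have "size ?T = length xs - k" using I(3) by simp
      moreover have "a \<in># ?T" using I(4) fI by auto
      ultimately show "z \<in> {diam T | T. T \<subseteq># mset xs \<and> size T = length xs - k \<and> a \<in># T}" by blast
    qed
  qed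
  then show ?thesis unfolding Lloc_def LL_def by simp
qed

lemma part_i:
  assumes "N \<ge> 2"
  shows "\<exists>c>0. \<exists>C>0. \<forall>xs. length xs = N \<longrightarrow>
       (\<exists>\<alpha>\<in>set xs. \<forall>i. 2 * i \<le> N \<longrightarrow> sim_by c C (Lloc xs i \<alpha>) (Labs xs i))"
proof -
  have main: "\<forall>xs. length xs = N \<longrightarrow>
       (\<exists>\<alpha>\<in>set xs. \<forall>i. 2 * i \<le> N \<longrightarrow> sim_by 1 2 (Lloc xs i \<alpha>) (Labs xs i))"
  proof (intro allI impI)
  fix xs :: "complex list" assume len: "length xs = N"
  define A where "A = {..<N}"
  have fA: "finite A" and cA: "card A = N" unfolding A_def by auto
  obtain u where u: "u \<in> A" and cen: "\<forall>j. 2 * j \<le> card A \<longrightarrow>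
           (\<exists>J. J \<subseteq> A \<and> card J = card A - j \<and> u \<in> J \<and> Dd (nth xs) J \<le> 2 * LA (nth xs) A j)"
    using central[OF fA, of "nth xs"] cA assms by auto
  have "xs ! u \<in> set xs" using u len unfolding A_def by auto
  moreover have "sim_by 1 2 (Lloc xs i (xs ! u)) (Labs xs i)" if i: "2 * i \<le> N" for i
  proof -
    obtain J where J: "J \<subseteq> A" "card J = card A - i" "u \<in> J" "Dd (nth xs) J \<le> 2 * LA (nth xs) A i"
      using cen i cA by auto
    have iN: "i < card A" using i assms cA by linarith
    have "LL (nth xs) A i (xs ! u) \<le> Dd (nth xs) J" using LL_le[OF fA J(1) J(2) J(3)] by simp
    moreover have "LA (nth xs) A i \<le> LL (nth xs) A i (xs ! u)" using LA_le_LL[OF fA u refl iN] .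
    ultimately show ?thesis unfolding sim_by_def Lloc_LL Labs_LA using J(4) len A_def by simp
  qed
  ultimately show "\<exists>\<alpha>\<in>set xs. \<forall>i. 2 * i \<le> N \<longrightarrow> sim_by 1 2 (Lloc xs i \<alpha>) (Labs xs i)" by blast
  qed
  show ?thesis
    apply (rule exI[of _ 1], rule conjI, simp)
    apply (rule exI[of _ 2], rule conjI, simp)
    using main by blast
qed

lemma part_ii:
  assumes "N \<ge> 2"
  shows "\<exists>c>0. \<exists>C>0. \<forall>xs r. length xs = N \<longrightarrow> 1 \<le> r \<longrightarrow> 2 * r \<le> N \<longrightarrow>
       sim_by c C (Delta xs r) (\<Prod>k<r. Labs xs k)"
proof -
  have main: "\<forall>xs r. length xs = N \<longrightarrow> 1 \<le> r \<longrightarrow> 2 * r \<le> N \<longrightarrow>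
       sim_by ((1/4)^(N*N)) 1 (Delta xs r) (\<Prod>k<r. Labs xs k)"
  proof (intro allI impI)
  fix xs :: "complex list" and r :: nat
  assume len: "length xs = N" and r1: "1 \<le> r" and r2: "2 * r \<le> N"
  define A where "A = {..<N}"
  have fA: "finite A" and cA: "card A = N" unfolding A_def by auto
  define x where "x = nth xs"
  define S where "S = {pp x f r | f. inj_on f {..<2*r} \<and> f ` {..<2*r} \<subseteq> A}"
  have D: "Delta xs r = Sup S" unfolding Delta_def S_def pp_def x_def A_def len ..
  define P where "P = (\<Prod>k<r. LA x A k)"
  have P: "(\<Prod>k<r. Labs xs k) = P" unfolding P_def x_def A_def using Labs_LA len by simp
  have P0: "0 \<le> P" unfolding P_def using LA_nonneg[OF fA] cA r2 by (auto intro: prod_nonneg)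
  have ub: "\<And>z. z \<in> S \<Longrightarrow> z \<le> P" unfolding S_def P_def using pair_upper[OF fA] by blast
  have ne: "S \<noteq> {}"
  proof -
    have "inj_on id {..<2*r}" "id ` {..<2*r} \<subseteq> A" using r2 unfolding A_def by auto
    then show ?thesis unfolding S_def by blast
  qed
  have bdd: "bdd_above S" using ub by (auto simp: bdd_above_def)
  have up: "Delta xs r \<le> P" unfolding D by (rule cSup_least[OF ne ub])
  obtain f where f: "inj_on f {..<2*r}" "f ` {..<2*r} \<subseteq> A" "(1/4::real)^(r*r) * P \<le> pp x f r"
    using pair_lower[OF fA, of r x] r2 cA unfolding P_def by auto
  have "pp x f r \<le> Delta xs r" unfolding D by (rule cSup_upper) (use f bdd S_def in auto)
  moreover have "(1/4::real)^(N*N) * P \<le> (1/4)^(r*r) * P"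
  proof (rule mult_right_mono[OF _ P0])
    have "r * r \<le> N * N" using r2 by (simp add: mult_le_mono)
    then show "(1/4::real)^(N*N) \<le> (1/4)^(r*r)" by (rule power_decreasing) auto
  qed
  ultimately show "sim_by ((1/4)^(N*N)) 1 (Delta xs r) (\<Prod>k<r. Labs xs k)"
    unfolding sim_by_def P using f(3) up by simp
  qed
  show ?thesis
    apply (rule exI[of _ "(1/4)^(N*N)"], rule conjI, simp)
    apply (rule exI[of _ 1], rule conjI, simp)
    using main by blast
qed


lemma dll_mem: "js \<in> set (dll n K) \<longleftrightarrow> length js = K \<and> distinct js \<and> set js \<subseteq> {..<n}"
  using dll_set by blast

lemma pw_map: "pw m (map f L) = (\<Sum>js\<leftarrow>L. (f js) ^ m)"
  unfolding pw_def by (simp add: comp_def)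

lemma pw_all: "\<exists>PP. \<forall>j. pf N (PP j) \<and> (\<forall>xs. length xs = N \<longrightarrow> pw j xs = PP j (aval xs))"
proof -
  have "\<forall>j. \<exists>P. pf N P \<and> (\<forall>xs. length xs = N \<longrightarrow> pw j xs = P (aval xs))" using pw_pf by blast
  then show ?thesis by (rule choice)
qed

lemma final_poly:
  assumes "\<forall>q. \<exists>F. pf n F \<and> (\<forall>z\<in>D. of_nat (fact q) * E (Ys z) q = F (val z))"
  shows "\<exists>Dp. \<forall>q. mpoly_vars n (Dp q) \<and> (\<forall>z\<in>D. mpoly_eval (Dp q) (val z) = of_nat (fact q) * E (Ys z) q)"
proof -
  from choice[OF assms] obtain FF where FF: "\<forall>q. pf n (FF q) \<and> (\<forall>z\<in>D. of_nat (fact q) * E (Ys z) q = FF q (val z))"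
    by blast
  have "\<forall>q. \<exists>p. mpoly_vars n p \<and> (\<forall>v. FF q v = mpoly_eval p v)" using FF pf_mpoly by blast
  from choice[OF this] obtain Dp where "\<forall>q. mpoly_vars n (Dp q) \<and> (\<forall>v. FF q v = mpoly_eval (Dp q) v)" by blast
  then show ?thesis using FF by metis
qed

lemma part_iii:
  assumes N2: "N \<ge> 2" and r1: "1 \<le> r" and r2: "2 * r \<le> N"
  shows "\<exists>h::nat. h \<ge> 1 \<and> (\<exists>D :: nat \<Rightarrow> int_mpoly. (\<forall>q\<in>{1..h}. mpoly_vars N (D q)) \<and>
         (\<exists>c>0. \<exists>C>0. \<forall>xs. length xs = N \<longrightarrow>
            sim_by c C (Delta xs r)
              (\<Sum>q=1..h. cmod (mpoly_eval (D q) (\<lambda>j. acoeff xs (Suc j))) powr (1 / real q))))"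
proof -
  define K where "K = 2 * r"
  define L where "L = dll N K"
  define M where "M = length L"
  have M1: "M \<ge> 1" unfolding M_def L_def using dll_ne[of K N] r2 K_def by (cases "dll N K") auto
  define Yf where "Yf xs js = (\<Prod>\<nu><r. (xs ! (js ! \<nu>) - xs ! (js ! (r + \<nu>))))" for xs :: "complex list" and js
  define Ys where "Ys xs = map (Yf xs) L" for xs
  have lenY: "length (Ys xs) = M" for xs unfolding Ys_def M_def by simp
  obtain PP where PP: "\<forall>j. pf N (PP j) \<and> (\<forall>xs. length xs = N \<longrightarrow> pw j xs = PP j (aval xs))"
    using pw_all by blast
  have A: "\<exists>H. pf N H \<and> (\<forall>xs\<in>{xs. length xs = N}. pw m (Ys xs) = H (aval xs))" for m
  proof -
    define g where "g v = (\<Prod>\<nu><r. (v \<nu> - v (r + \<nu>)))^m" for v :: "nat \<Rightarrow> complex"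
    have "pf K (\<lambda>v. v \<nu> - v (r + \<nu>))" if "\<nu> \<in> {..<r}" for \<nu>
      using pf_diff[OF pf_var pf_var] that unfolding K_def by auto
    then have "pf K (\<lambda>v. \<Prod>\<nu><r. (v \<nu> - v (r + \<nu>)))" by (intro pf_prod) auto
    then have pg: "pf K g" unfolding g_def by (rule pf_pow)
    obtain m' G where G: "pf m' G" "\<forall>ys. (\<Sum>js\<leftarrow>dll (length ys) K. g (\<lambda>t. ys ! (js ! t))) = G (\<lambda>j. pw j ys)"
      using sum_g[OF pg] by blast
    define H where "H v = G (\<lambda>j. PP j v)" for v
    have "pf N H" unfolding H_def by (rule pf_comp[OF G(1)]) (use PP in auto)
    moreover have "pw m (Ys xs) = H (aval xs)" if "length xs = N" for xs
    proof -
      have "pw m (Ys xs) = (\<Sum>js\<leftarrow>dll (length xs) K. g (\<lambda>t. xs ! (js ! t)))"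
        unfolding Ys_def pw_map L_def g_def Yf_def that ..
      also have "\<dots> = G (\<lambda>j. pw j xs)" using G(2) by simp
      also have "\<dots> = H (aval xs)" unfolding H_def using PP that by simp
      finally show ?thesis .
    qed
    ultimately show ?thesis by blast
  qed
  have B: "\<forall>q. \<exists>F. pf N F \<and> (\<forall>xs\<in>{xs. length xs = N}. of_nat (fact q) * E (Ys xs) q = F (aval xs))"
    using E_from_pw[OF A] by blast
  obtain Dp where Dp: "\<forall>q. mpoly_vars N (Dp q) \<and> (\<forall>xs\<in>{xs. length xs = N}. mpoly_eval (Dp q) (aval xs) = of_nat (fact q) * E (Ys xs) q)"
    using final_poly[OF B] by blast
  define KK where "KK = real M * (real (fact M) * 2 ^ M)"
  have KK0: "0 < KK" unfolding KK_def using M1 by simp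
  have main: "sim_by (1 / KK) 2 (Delta xs r) (\<Sum>q=1..M. cmod (mpoly_eval (Dp q) (\<lambda>j. acoeff xs (Suc j))) powr (1 / real q))"
    if len: "length xs = N" for xs
  proof -
    have sumS: "(\<Sum>q=1..M. cmod (mpoly_eval (Dp q) (\<lambda>j. acoeff xs (Suc j))) powr (1 / real q)) = Ssum (Ys xs)"
      unfolding Ssum_def lenY using Dp len unfolding aval_def by simp
    define SD where "SD = {(\<Prod>\<nu><r. cmod (xs ! (f \<nu>) - xs ! (f (r + \<nu>)))) | f.
      inj_on f {..<2*r} \<and> f ` {..<2*r} \<subseteq> {..<length xs}}"
    have Dl: "Delta xs r = Sup SD" unfolding Delta_def SD_def ..
    have a: "\<exists>y\<in>set (Ys xs). z = cmod y" if "z \<in> SD" for z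
    proof -
      obtain f where f: "z = (\<Prod>\<nu><r. cmod (xs ! (f \<nu>) - xs ! (f (r + \<nu>))))"
        "inj_on f {..<2*r}" "f ` {..<2*r} \<subseteq> {..<length xs}" using \<open>z \<in> SD\<close> unfolding SD_def by blast
      define js where "js = map f [0..<2*r]"
      have "js \<in> set L" unfolding L_def dll_mem js_def K_def using f(2,3) len
        by (auto simp: distinct_map atLeast0LessThan)
      moreover have "cmod (Yf xs js) = z"
      proof -
        have "cmod (Yf xs js) = (\<Prod>\<nu><r. cmod (xs ! (js ! \<nu>) - xs ! (js ! (r + \<nu>))))"
          unfolding Yf_def prod_norm[symmetric] ..
        also have "\<dots> = z" unfolding f(1) js_def by (rule prod.cong) auto
        finally show ?thesis .
      qed
      ultimately show ?thesis unfolding Ys_def by force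
    qed
    have b: "cmod y \<in> SD" if yY: "y \<in> set (Ys xs)" for y
    proof -
      obtain js where js: "js \<in> set L" "y = Yf xs js" using yY unfolding Ys_def by auto
      have jsp: "length js = 2 * r" "distinct js" "set js \<subseteq> {..<N}" using js(1) unfolding L_def dll_mem K_def by auto
      have "inj_on (nth js) {..<2*r}" by (rule inj_on_nth) (use jsp in auto)
      moreover have "nth js ` {..<2*r} \<subseteq> {..<length xs}"
      proof
        fix z assume "z \<in> nth js ` {..<2*r}"
        then obtain t where "t < 2 * r" "z = js ! t" by auto
        then have "z \<in> set js" using jsp(1) by simp
        then show "z \<in> {..<length xs}" using jsp(3) len by auto
      qed
      moreover have "cmod y = (\<Prod>\<nu><r. cmod (xs ! (js ! \<nu>) - xs ! (js ! (r + \<nu>))))"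
        unfolding js(2) Yf_def prod_norm[symmetric] ..
      ultimately show ?thesis unfolding SD_def mem_Collect_eq by (intro exI[of _ "nth js"] conjI)
    qed
    have Yne: "set (Ys xs) \<noteq> {}" using lenY[of xs] M1 by (cases "Ys xs") auto
    then obtain y0 where y0: "y0 \<in> set (Ys xs)" using ex_in_conv by metis
    have SDne: "SD \<noteq> {}" using b[OF y0] by blast
    have SDsub: "SD \<subseteq> cmod ` set (Ys xs)" using a by blast
    have bdd: "bdd_above SD" using finite_subset[OF SDsub] by (auto intro: bdd_above_finite)
    have up: "Delta xs r \<le> 2 * Ssum (Ys xs)" unfolding Dl
    proof (rule cSup_least[OF SDne])
      fix z assume "z \<in> SD"
      then obtain y where "y \<in> set (Ys xs)" "z = cmod y" using a by blast
      then show "z \<le> 2 * Ssum (Ys xs)" using max_le_Ssum by simp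
    qed
    have yD: "cmod y \<le> Delta xs r" if "y \<in> set (Ys xs)" for y
      unfolding Dl by (rule cSup_upper[OF b[OF that] bdd])
    have D0: "0 \<le> Delta xs r" using yD[OF y0] norm_ge_zero[of y0] by linarith
    have lo: "Ssum (Ys xs) \<le> KK * Delta xs r"
      using Ssum_le_max[of "Ys xs" "Delta xs r"] yD D0 lenY unfolding KK_def by (simp add: mult.assoc)
    have lo': "1 / KK * Ssum (Ys xs) \<le> Delta xs r"
    proof -
      have "1 / KK * Ssum (Ys xs) \<le> 1 / KK * (KK * Delta xs r)"
        using lo KK0 by (intro mult_left_mono) auto
      also have "\<dots> = Delta xs r" using KK0 by simp
      finally show ?thesis .
    qed
    show ?thesis unfolding sim_by_def sumS using up lo' by blast
  qed
  show ?thesis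
    apply (rule exI[of _ M], rule conjI, rule M1)
    apply (rule exI[of _ Dp], rule conjI)
    using Dp apply (simp only: Ball_def, blast)
    apply (rule exI[of _ "1 / KK"], rule conjI, simp add: KK0)
    apply (rule exI[of _ 2], rule conjI, simp)
    using main by blast
qed


lemma greedy:
  fixes d :: "nat \<Rightarrow> real"
  shows "K \<le> n \<Longrightarrow> \<exists>js. length js = K \<and> distinct js \<and> set js \<subseteq> {..<n} \<and>
     (\<forall>i<K. \<forall>j\<in>{..<n} - set (take i js). d j \<le> d (js ! i))"
proof (induction K)
  case 0 then show ?case by auto
next
  case (Suc K)
  then obtain js where js: "length js = K" "distinct js" "set js \<subseteq> {..<n}"
     "\<forall>i<K. \<forall>j\<in>{..<n} - set (take i js). d j \<le> d (js ! i)" by auto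
  define R where "R = {..<n} - set js"
  have "card (set js) = K" using js distinct_card by blast
  then have "card R = n - K" unfolding R_def using js(3) by (simp add: card_Diff_subset)
  then have Rne: "R \<noteq> {}" using Suc.prems by auto
  have fR: "finite R" unfolding R_def by simp
  obtain j where j: "j \<in> R" "d j = Max (d ` R)"
  proof -
    have "Max (d ` R) \<in> d ` R" using Max_in[of "d ` R"] fR Rne by auto
    then show ?thesis using that by force
  qed
  have jmax: "\<forall>j'\<in>R. d j' \<le> d j" using j fR by (simp add: Max_ge)
  define js' where "js' = js @ [j]"
  have "length js' = Suc K" "distinct js'" "set js' \<subseteq> {..<n}"
    using js j unfolding js'_def R_def by auto
  moreover have "\<forall>i<Suc K. \<forall>j'\<in>{..<n} - set (take i js'). d j' \<le> d (js' ! i)"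
  proof (intro allI impI ballI)
    fix i j' assume i: "i < Suc K" and j': "j' \<in> {..<n} - set (take i js')"
    show "d j' \<le> d (js' ! i)"
    proof (cases "i < K")
      case True
      then have "take i js' = take i js" "js' ! i = js ! i" unfolding js'_def using js(1) by (auto simp: nth_append)
      then show ?thesis using js(4) True j' by auto
    next
      case False
      then have "i = K" using i by simp
      then have "take i js' = js" "js' ! i = j" unfolding js'_def using js(1) by auto
      then show ?thesis using jmax j' unfolding R_def by auto
    qed
  qed
  ultimately show ?case by blast
qed

lemma part_iv:
  assumes N2: "N \<ge> 2" and kN: "k \<le> N - 2"
  shows "\<exists>m::nat. m \<ge> 1 \<and> (\<exists>\<sigma> :: nat \<Rightarrow> int_mpoly. (\<forall>i\<in>{1..m}. mpoly_vars (N + 1) (\<sigma> i)) \<and>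
         (\<exists>c>0. \<exists>C>0. \<forall>xs. length xs = N \<longrightarrow> (\<forall>\<alpha>\<in>set xs.
            sim_by c C (\<Prod>i\<le>k. Lloc xs i \<alpha>)
              (\<Sum>i=1..m. cmod (mpoly_eval (\<sigma> i)
                   (\<lambda>j. if j < N then acoeff xs (Suc j) else \<alpha>)) powr (1 / real i)))))"
proof -
  define K where "K = Suc k"
  have KN: "K < N" unfolding K_def using kN N2 by linarith
  define L where "L = dll N K"
  define M where "M = length L"
  have M1: "M \<ge> 1" unfolding M_def L_def using dll_ne[of K N] KN by (cases "dll N K") auto
  define Yf where "Yf z js = (\<Prod>t<K. (fst z ! (js ! t) - snd z))" for z :: "complex list \<times> complex" and js
  define Ys where "Ys z = map (Yf z) L" for z
  define val where "val z = (\<lambda>j. if j < N then acoeff (fst z) (Suc j) else snd z)" for z :: "complex list \<times> complex"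
  define D where "D = {z :: complex list \<times> complex. length (fst z) = N}"
  have lenY: "length (Ys z) = M" for z unfolding Ys_def M_def by simp
  obtain PP where PP: "\<forall>j. pf N (PP j) \<and> (\<forall>xs. length xs = N \<longrightarrow> pw j xs = PP j (aval xs))"
    using pw_all by blast
  define Q where "Q j v = (\<Sum>l\<le>j. of_nat (j choose l) * (- v N) ^ (j - l) * PP l v)" for j v
  have pQ: "pf (Suc N) (Q j)" for j
  proof -
    have "pf (Suc N) (\<lambda>v. of_nat (j choose l) * (- v N) ^ (j - l) * PP l v)" for l
      using pf_mult[OF pf_mult[OF pf_nat pf_pow[OF pf_neg[OF pf_var[of N "Suc N"]]]] pf_mono[of N "PP l" "Suc N"]] PP
      by auto
    then show ?thesis unfolding Q_def by (intro pf_sum) auto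
  qed
  have Qv: "pw j (map (\<lambda>x. x - snd z) (fst z)) = Q j (val z)" if "z \<in> D" for j z
  proof -
    obtain xs a where z: "z = (xs, a)" by force
    have len: "length xs = N" using that z unfolding D_def by simp
    have "pw j (map (\<lambda>x. x - a) xs) = (\<Sum>x\<leftarrow>xs. \<Sum>l\<le>j. of_nat (j choose l) * x ^ l * (- a) ^ (j - l))"
      unfolding pw_def by (simp add: comp_def binomial_ring[of _ "- a", simplified])
    also have "\<dots> = (\<Sum>l\<le>j. \<Sum>x\<leftarrow>xs. of_nat (j choose l) * x ^ l * (- a) ^ (j - l))"
      by (rule sum_list_sum_swap)
    also have "\<dots> = (\<Sum>l\<le>j. of_nat (j choose l) * (- a) ^ (j - l) * pw l xs)"
      unfolding pw_def by (simp add: sum_list_const_mult[symmetric] sum_list_multc[symmetric] algebra_simps)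
    also have "\<dots> = Q j (val z)"
    proof -
      have "pw l xs = PP l (val z)" for l
      proof -
        have "pw l xs = PP l (aval xs)" using PP len by simp
        also have "\<dots> = PP l (val z)"
          by (rule pf_agree[of N]) (use PP in \<open>auto simp: val_def aval_def z\<close>)
        finally show ?thesis .
      qed
      then show ?thesis unfolding Q_def by (simp add: val_def z)
    qed
    finally show ?thesis using z by simp
  qed
  have A: "\<exists>H. pf (Suc N) H \<and> (\<forall>z\<in>D. pw m (Ys z) = H (val z))" for m
  proof -
    define g where "g v = (\<Prod>t<K. v t)^m" for v :: "nat \<Rightarrow> complex"
    have "pf K (\<lambda>v. \<Prod>t<K. v t)" by (intro pf_prod) (auto intro: pf_var)
    then have pg: "pf K g" unfolding g_def by (rule pf_pow)
    obtain m' G where G: "pf m' G" "\<forall>ys. (\<Sum>js\<leftarrow>dll (length ys) K. g (\<lambda>t. ys ! (js ! t))) = G (\<lambda>j. pw j ys)"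
      using sum_g[OF pg] by blast
    define H where "H v = G (\<lambda>j. Q j v)" for v
    have "pf (Suc N) H" unfolding H_def by (rule pf_comp[OF G(1)]) (use pQ in auto)
    moreover have "pw m (Ys z) = H (val z)" if zD: "z \<in> D" for z
    proof -
      define zs where "zs = map (\<lambda>x. x - snd z) (fst z)"
      have lzs: "length zs = N" using zD unfolding zs_def D_def by simp
      have "pw m (Ys z) = (\<Sum>js\<leftarrow>L. (Yf z js) ^ m)" unfolding Ys_def pw_map ..
      also have "\<dots> = (\<Sum>js\<leftarrow>dll (length zs) K. g (\<lambda>t. zs ! (js ! t)))"
        unfolding lzs L_def
      proof (rule arg_cong[where f = sum_list], rule map_cong[OF refl])
        fix js assume "js \<in> set (dll N K)"
        then have jsp: "length js = K" "set js \<subseteq> {..<N}" unfolding dll_mem by auto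
        have "zs ! (js ! t) = fst z ! (js ! t) - snd z" if "t < K" for t
        proof -
          have "js ! t \<in> set js" using that jsp(1) by simp
          then have "js ! t < N" using jsp(2) by auto
          then show ?thesis unfolding zs_def using lzs zs_def by simp
        qed
        then show "Yf z js ^ m = g (\<lambda>t. zs ! (js ! t))" unfolding Yf_def g_def by simp
      qed
      also have "\<dots> = G (\<lambda>j. pw j zs)" using G(2) by simp
      also have "\<dots> = H (val z)" unfolding H_def zs_def using Qv[OF zD] by simp
      finally show ?thesis .
    qed
    ultimately show ?thesis by blast
  qed
  have B: "\<forall>q. \<exists>F. pf (Suc N) F \<and> (\<forall>z\<in>D. of_nat (fact q) * E (Ys z) q = F (val z))"
    using E_from_pw[OF A] by blast
  obtain Dp where Dp: "\<forall>q. mpoly_vars (Suc N) (Dp q) \<and> (\<forall>z\<in>D. mpoly_eval (Dp q) (val z) = of_nat (fact q) * E (Ys z) q)"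
    using final_poly[OF B] by blast
  define KK where "KK = real M * (real (fact M) * 2 ^ M)"
  have KK0: "0 < KK" unfolding KK_def using M1 by simp
  have main: "sim_by (1 / KK) (2 ^ Suc K) (\<Prod>i\<le>k. Lloc xs i a)
         (\<Sum>i=1..M. cmod (mpoly_eval (Dp i) (\<lambda>j. if j < N then acoeff xs (Suc j) else a)) powr (1 / real i))"
    if len: "length xs = N" and aX: "a \<in> set xs" for xs a
  proof -
    define z where "z = (xs, a)"
    have zD: "z \<in> D" unfolding z_def D_def using len by simp
    have sumS: "(\<Sum>i=1..M. cmod (mpoly_eval (Dp i) (\<lambda>j. if j < N then acoeff xs (Suc j) else a)) powr (1 / real i))
        = Ssum (Ys z)"
    proof -
      have ev: "mpoly_eval (Dp q) (\<lambda>j. if j < N then acoeff xs (Suc j) else a) = of_nat (fact q) * E (Ys z) q" for q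
      proof -
        have "mpoly_eval (Dp q) (val z) = of_nat (fact q) * E (Ys z) q" using Dp zD by blast
        then show ?thesis unfolding val_def z_def fst_conv snd_conv .
      qed
      show ?thesis unfolding Ssum_def lenY ev ..
    qed
    define x where "x = nth xs"
    define A where "A = {..<N}"
    have fA: "finite A" and cA: "card A = N" unfolding A_def by auto
    obtain i0 where i0: "i0 < N" "xs ! i0 = a" using aX len by (auto simp: in_set_conv_nth)
    have i0A: "i0 \<in> A" "x i0 = a" using i0 unfolding A_def x_def by auto
    define d where "d j = cmod (xs ! j - a)" for j
    define P where "P = (\<Prod>i<K. LL x A i a)"
    have PL: "(\<Prod>i\<le>k. Lloc xs i a) = P" unfolding P_def K_def x_def A_def Lloc_LL len
      by (simp add: lessThan_Suc_atMost)
    have LLnn: "0 \<le> LL x A i a" if "i < K" for i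
      using LA_le_LL[of A i0 x a i] fA i0A LA_nonneg[OF fA, of i x] that KN cA by simp
    have P0: "0 \<le> P" unfolding P_def using LLnn by (auto intro: prod_nonneg)
    have cY: "cmod (Yf z js) = (\<Prod>t<K. d (js ! t))" for js
      unfolding Yf_def d_def z_def prod_norm[symmetric] by simp
    have L1: "cmod y \<le> P" if yY: "y \<in> set (Ys z)" for y
    proof -
      obtain js where js: "js \<in> set L" "y = Yf z js" using yY unfolding Ys_def by auto
      have jsp: "length js = K" "distinct js" "set js \<subseteq> {..<N}" using js(1) unfolding L_def dll_mem by auto
      have "(\<Prod>t\<in>{..<K}. d (js ! t)) \<le> (\<Prod>i<card {..<K}. LL x A i a)"
      proof (rule prod_le_L)
        fix V' assume V': "V' \<subseteq> {..<K}" "V' \<noteq> {}"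
        define s where "s = card V'"
        have fV: "finite V'" using V' finite_subset by blast
        have s1: "s \<ge> 1" using V' fV unfolding s_def by (simp add: Suc_le_eq card_gt_0_iff)
        have sK: "s \<le> K" using card_mono[OF _ V'(1)] unfolding s_def by simp
        obtain I where I: "I \<subseteq> A" "card I = card A - (s - 1)" "\<exists>i\<in>I. x i = a" "LL x A (s - 1) a = Dd x I"
        proof -
          have "s - 1 < card A" using sK KN cA by linarith
          then show ?thesis using LL_att[of A i0 x a "s - 1"] fA i0A that by blast
        qed
        obtain i1 where i1: "i1 \<in> I" "x i1 = a" using I(3) by blast
        have fI: "finite I" using I(1) fA finite_subset by blast
        define Ex where "Ex = A - I"
        have cE: "card Ex = s - 1" unfolding Ex_def using I fA s1 sK KN cA
          by (simp add: card_Diff_subset fI)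
        have "\<exists>t\<in>V'. js ! t \<in> I"
        proof (rule ccontr)
          assume neg: "\<not> (\<exists>t\<in>V'. js ! t \<in> I)"
          have inA: "js ! t \<in> A" if "t \<in> V'" for t
          proof -
            have "t < length js" using that V'(1) jsp(1) by auto
            then have "js ! t \<in> set js" by simp
            then show ?thesis using jsp(3) unfolding A_def by auto
          qed
          have "inj_on (nth js) V'" by (rule inj_on_nth) (use jsp V' in auto)
          moreover have "nth js ` V' \<subseteq> Ex" unfolding Ex_def using neg inA by auto
          moreover have "finite Ex" unfolding Ex_def using fA by simp
          ultimately have "card V' \<le> card Ex" using card_inj_on_le by blast
          then show False using cE s1 unfolding s_def by simp
        qed
        then obtain t where t: "t \<in> V'" "js ! t \<in> I" by blast
        have "d (js ! t) = cmod (x (js ! t) - x i1)" unfolding d_def x_def using i1 x_def by simp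
        also have "\<dots> \<le> Dd x I" by (rule Dd_ge[OF fI t(2) i1(1)])
        finally show "\<exists>t\<in>V'. d (js ! t) \<le> LL x A (card V' - 1) a" using t I(4) unfolding s_def by auto
      qed (auto simp: d_def)
      then show ?thesis using js(2) cY unfolding P_def by simp
    qed
    have L2: "\<exists>y\<in>set (Ys z). P \<le> 2 ^ K * cmod y"
    proof -
      obtain js where js: "length js = K" "distinct js" "set js \<subseteq> {..<N}"
        "\<forall>i<K. \<forall>j\<in>{..<N} - set (take i js). d j \<le> d (js ! i)"
        using greedy[of K N d] KN by auto
      have jsL: "js \<in> set L" unfolding L_def dll_mem using js by auto
      have U: "LL x A i a \<le> 2 * d (js ! i)" if i: "i < K" for i
      proof -
        define Ex where "Ex = set (take i js)"
        have cEx: "card Ex = i" unfolding Ex_def using js(1,2) i by (simp add: distinct_card)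
        have ExA: "Ex \<subseteq> A" unfolding Ex_def A_def using js(3) set_take_subset[of i js] by (rule order_trans[rotated])
        have cR: "card (A - Ex) = N - i" using cEx ExA fA cA by (simp add: card_Diff_subset finite_subset)
        have js4: "\<forall>j\<in>{..<N} - set (take i js). d j \<le> d (js ! i)" using js(4) i by blast
        have dR: "d j \<le> d (js ! i)" if jR: "j \<in> A - Ex" for j
        proof -
          have "j \<in> {..<N} - set (take i js)" using jR unfolding Ex_def A_def .
          then show ?thesis using js4 by blast
        qed
        have d0: "0 \<le> d (js ! i)" unfolding d_def by simp
        obtain J where J: "J \<subseteq> A" "card J = card A - i" "i0 \<in> J" "\<And>j. j \<in> J \<Longrightarrow> d j \<le> d (js ! i)"
        proof (cases "i0 \<in> Ex")
          case False
          have h1: "A - Ex \<subseteq> A" by blast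
          have h2: "card (A - Ex) = card A - i" using cR cA by simp
          have h3: "i0 \<in> A - Ex" using False i0A by blast
          show ?thesis by (rule that[OF h1 h2 h3 dR])
        next
          case True
          have "0 < card (A - Ex)" using cR i KN by linarith
          then have "A - Ex \<noteq> {}" by (metis card.empty less_irrefl)
          then obtain j1 where j1: "j1 \<in> A - Ex" by blast
          have fR: "finite (A - Ex)" using fA by simp
          have c1: "card (A - Ex - {j1}) = N - i - 1" using j1 cR fR by (simp add: card_Diff_singleton)
          have "i0 \<notin> A - Ex - {j1}" using True by blast
          then have "card (insert i0 (A - Ex - {j1})) = Suc (N - i - 1)" using c1 fR by simp
          also have "\<dots> = N - i" using i KN by linarith
          finally have cI: "card (insert i0 (A - Ex - {j1})) = card A - i" using cA by simp
          have dI: "d j \<le> d (js ! i)" if "j \<in> insert i0 (A - Ex - {j1})" for j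
          proof (cases "j = i0")
            case True
            then have "d j = 0" unfolding d_def using i0 by simp
            then show ?thesis using d0 by simp
          next
            case False
            then show ?thesis using that dR by blast
          qed
          have sub: "insert i0 (A - Ex - {j1}) \<subseteq> A" using i0A by blast
          have i0I: "i0 \<in> insert i0 (A - Ex - {j1})" by simp
          show ?thesis by (rule that[OF sub cI i0I dI])
        qed
        have "LL x A i a \<le> Dd x J" using LL_le[of A J i i0 x a] fA J(1) J(2) J(3) i0A(2) by blast
        also have "Dd x J \<le> 2 * d (js ! i)"
        proof (rule Dd_center)
          show "J \<noteq> {}" using J(3) by auto
          fix j assume "j \<in> J"
          then show "cmod (x j - a) \<le> d (js ! i)" using J(4) unfolding d_def x_def by auto
        qed
        finally show ?thesis .
      qed
      have "P \<le> (\<Prod>i<K. 2 * d (js ! i))" unfolding P_def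
        by (rule prod_mono) (use U LLnn in auto)
      also have "\<dots> = 2 ^ K * cmod (Yf z js)" unfolding cY by (simp add: prod.distrib)
      finally show ?thesis using jsL unfolding Ys_def by auto
    qed
    then obtain y where y: "y \<in> set (Ys z)" "P \<le> 2 ^ K * cmod y" by blast
    have up: "P \<le> 2 ^ Suc K * Ssum (Ys z)"
    proof -
      have "cmod y \<le> 2 * Ssum (Ys z)" using max_le_Ssum[OF y(1)] .
      then have "2 ^ K * cmod y \<le> 2 ^ K * (2 * Ssum (Ys z))" by (intro mult_left_mono) auto
      moreover have "(2::real) ^ Suc K * Ssum (Ys z) = 2 ^ K * (2 * Ssum (Ys z))" by simp
      ultimately show ?thesis using y(2) by linarith
    qed
    have lo: "Ssum (Ys z) \<le> KK * P"
      using Ssum_le_max[of "Ys z" P] L1 P0 lenY unfolding KK_def by (simp add: mult.assoc)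
    have lo': "1 / KK * Ssum (Ys z) \<le> P"
    proof -
      have "1 / KK * Ssum (Ys z) \<le> 1 / KK * (KK * P)"
        using lo KK0 by (intro mult_left_mono) auto
      also have "\<dots> = P" using KK0 by simp
      finally show ?thesis .
    qed
    show ?thesis unfolding sim_by_def sumS PL using up lo' by blast
  qed
  show ?thesis
    apply (rule exI[of _ M], rule conjI, rule M1)
    apply (rule exI[of _ Dp], rule conjI)
    using Dp apply (simp only: Ball_def Suc_eq_plus1[symmetric], blast)
    apply (rule exI[of _ "1 / KK"], rule conjI, simp add: KK0)
    apply (rule exI[of _ "2 ^ Suc K"], rule conjI, simp)
    using main by blast
qed


theorem theorem2:
  fixes N :: nat
  assumes "N \<ge> 2"
  shows
   "(\<exists>c>0. \<exists>C>0. \<forall>xs. length xs = N \<longrightarrow>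
       (\<exists>\<alpha>\<in>set xs. \<forall>i. 2 * i \<le> N \<longrightarrow> sim_by c C (Lloc xs i \<alpha>) (Labs xs i)))
    \<and> (\<exists>c>0. \<exists>C>0. \<forall>xs r. length xs = N \<longrightarrow> 1 \<le> r \<longrightarrow> 2 * r \<le> N \<longrightarrow>
       sim_by c C (Delta xs r) (\<Prod>k<r. Labs xs k))
    \<and> (\<forall>r. 1 \<le> r \<longrightarrow> 2 * r \<le> N \<longrightarrow>
       (\<exists>h::nat. h \<ge> 1 \<and> (\<exists>D :: nat \<Rightarrow> int_mpoly. (\<forall>q\<in>{1..h}. mpoly_vars N (D q)) \<and>
         (\<exists>c>0. \<exists>C>0. \<forall>xs. length xs = N \<longrightarrow>
            sim_by c C (Delta xs r)
              (\<Sum>q=1..h. cmod (mpoly_eval (D q) (\<lambda>j. acoeff xs (Suc j))) powr (1 / real q))))))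
    \<and> (\<forall>k. k \<le> N - 2 \<longrightarrow>
       (\<exists>m::nat. m \<ge> 1 \<and> (\<exists>\<sigma> :: nat \<Rightarrow> int_mpoly. (\<forall>i\<in>{1..m}. mpoly_vars (N + 1) (\<sigma> i)) \<and>
         (\<exists>c>0. \<exists>C>0. \<forall>xs. length xs = N \<longrightarrow> (\<forall>\<alpha>\<in>set xs.
            sim_by c C (\<Prod>i\<le>k. Lloc xs i \<alpha>)
              (\<Sum>i=1..m. cmod (mpoly_eval (\<sigma> i)
                   (\<lambda>j. if j < N then acoeff xs (Suc j) else \<alpha>)) powr (1 / real i)))))))"
proof -
  have i: "\<exists>c>0. \<exists>C>0. \<forall>xs. length xs = N \<longrightarrow>
       (\<exists>\<alpha>\<in>set xs. \<forall>i. 2 * i \<le> N \<longrightarrow> sim_by c C (Lloc xs i \<alpha>) (Labs xs i))"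
    by (rule part_i[OF assms])
  have ii: "\<exists>c>0. \<exists>C>0. \<forall>xs r. length xs = N \<longrightarrow> 1 \<le> r \<longrightarrow> 2 * r \<le> N \<longrightarrow>
       sim_by c C (Delta xs r) (\<Prod>k<r. Labs xs k)"
    by (rule part_ii[OF assms])
  have iii: "\<forall>r. 1 \<le> r \<longrightarrow> 2 * r \<le> N \<longrightarrow>
       (\<exists>h::nat. h \<ge> 1 \<and> (\<exists>D :: nat \<Rightarrow> int_mpoly. (\<forall>q\<in>{1..h}. mpoly_vars N (D q)) \<and>
         (\<exists>c>0. \<exists>C>0. \<forall>xs. length xs = N \<longrightarrow>
            sim_by c C (Delta xs r)
              (\<Sum>q=1..h. cmod (mpoly_eval (D q) (\<lambda>j. acoeff xs (Suc j))) powr (1 / real q)))))"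
    using part_iii[OF assms] by blast
  have iv: "\<forall>k. k \<le> N - 2 \<longrightarrow>
       (\<exists>m::nat. m \<ge> 1 \<and> (\<exists>\<sigma> :: nat \<Rightarrow> int_mpoly. (\<forall>i\<in>{1..m}. mpoly_vars (N + 1) (\<sigma> i)) \<and>
         (\<exists>c>0. \<exists>C>0. \<forall>xs. length xs = N \<longrightarrow> (\<forall>\<alpha>\<in>set xs.
            sim_by c C (\<Prod>i\<le>k. Lloc xs i \<alpha>)
              (\<Sum>i=1..m. cmod (mpoly_eval (\<sigma> i)
                   (\<lambda>j. if j < N then acoeff xs (Suc j) else \<alpha>)) powr (1 / real i))))))"
    using part_iv[OF assms] by blast
  show ?thesis using i ii iii iv by blast
qed

end
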